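(* Fix $n\ge 2$ and $q\in\{1,\dots,n\}$, and let $\{p_r\}$ be a sequence of integers with $0\le p_r\le r-n$ such that \[ \lim_{r\to\infty}\frac{2p_r-r}{\sqrt r}=a \] for some $a\in\mathbb{R}$. Then for almost every $x\in\Omega$, \[ \lim_{r\to\infty}\left(\frac{(q-1)!\,(n-q)!\,\sqrt{2\pi r}}{2^{\,r+2-3n}\,r^{n-1}}\right)\cdot k_{p_r,q}(x;r) = e^{-a^2/2}. \]
   Context: Fix an integer $n\ge 2$. For an integer $r\ge n$ write $[r]=\{1,\dots,r\}$ and $\binom{[r]}{n-1}$ for the set of $(n-1)$-element subsets of $[r]$; elements are written $I=\{i_1<\dots<i_{n-1}\}$. A Betti table is an array of real numbers $k_{p,q}$ with columns $p=0,\dots,r-n$ and rows $q=1,\dots,n$. For $I\in\binom{[r]}{n-1}$ write $[r]\setminus I=\{d_0<d_1<\dots<d_{r-n}\}$; the pure diagram $\pi(r,I)$ is the Betti table with $k_{p,q}(\pi(r,I))=0$ if $q\neq d_p-p$, and $k_{p,d_p-p}(\pi(r,I)) = (r-n)!\cdot\prod_{0\le \ell\le r-n,\ \ell\neq p}\frac{1}{|d_\ell-d_p|}$. Let $\binom{[\infty]}{n-1}$ be the set of all $(n-1)$-element subsets of $\mathbb{Z}_{>0}$, and let $\Omega=[0,1]^{\binom{[\infty]}{n-1}}$ carry the product probability measure of the uniform (Lebesgue) measures on the factors. For $x=(x_I)\in\Omega$ and $r\ge n$ set $k_{p,q}(x;r)=\sum_{I\in\binom{[r]}{n-1}} x_I\,k_{p,q}(\pi(r,I))$.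 *)

theory Defs
  imports "HOL-Probability.Probability"
begin

definition subsets_r :: "nat \<Rightarrow> nat \<Rightarrow> nat set set" where
  "subsets_r n r = {I. I \<subseteq> {1..r} \<and> card I = n - 1}"

definition subsets_inf :: "nat \<Rightarrow> nat set set" where
  "subsets_inf n = {I. finite I \<and> I \<subseteq> {0<..} \<and> card I = n - 1}"

text \<open>d_p: the p-th (0-based) element of [r] minus I in increasing order.\<close>
definition dseq :: "nat \<Rightarrow> nat set \<Rightarrow> nat \<Rightarrow> nat" where
  "dseq r I p = sorted_list_of_set ({1..r} - I) ! p"

definition pure_diagram :: "nat \<Rightarrow> nat \<Rightarrow> nat set \<Rightarrow> nat \<Rightarrow> nat \<Rightarrow> real" where
  "pure_diagram n r I p q =
     (if int q \<noteq> int (dseq r I p) - int p then 0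
      else fact (r - n) *
        (\<Prod>l\<in>{0..r-n} - {p}. 1 / \<bar>real (dseq r I l) - real (dseq r I p)\<bar>))"

definition kx :: "nat \<Rightarrow> (nat set \<Rightarrow> real) \<Rightarrow> nat \<Rightarrow> nat \<Rightarrow> nat \<Rightarrow> real" where
  "kx n x r p q = (\<Sum>I\<in>subsets_r n r. x I * pure_diagram n r I p q)"

definition Omega :: "nat \<Rightarrow> (nat set \<Rightarrow> real) measure" where
  "Omega n = (\<Pi>\<^sub>M I\<in>subsets_inf n. uniform_measure lborel {0..1::real})"

end

theory Submission
  imports Defs
begin


fun esym :: "nat \<Rightarrow> nat \<Rightarrow> real" where
  "esym 0 N = 1"
| "esym (Suc k) 0 = 0"
| "esym (Suc k) (Suc N) = esym (Suc k) N + real (Suc N) * esym k N"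

lemma esym_nonneg: "esym k N \<ge> 0"
  by (induction k N rule: esym.induct) auto

lemma pow_diff_le:
  fixes X Y :: real assumes "0 \<le> Y" "Y \<le> X"
  shows "X^(Suc k) - Y^(Suc k) \<le> real (Suc k) * X^k * (X - Y)"
proof (induction k)
  case 0 then show ?case by simp
next
  case (Suc k)
  have "X^(Suc (Suc k)) - Y^(Suc (Suc k)) = X*(X^(Suc k) - Y^(Suc k)) + Y^(Suc k)*(X-Y)"
    by (simp add: algebra_simps)
  also have "\<dots> \<le> X*(real (Suc k) * X^k * (X - Y)) + X^(Suc k)*(X-Y)"
    using Suc assms by (intro add_mono mult_left_mono mult_right_mono power_mono) auto
  also have "\<dots> = real (Suc (Suc k)) * X^(Suc k) * (X-Y)" by (simp add: algebra_simps)
  finally show ?case .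
qed

lemma pow_add_ge:
  fixes s t :: real assumes "0 \<le> s" "0 \<le> t"
  shows "s^(Suc k) + real (Suc k) * t * s^k \<le> (s+t)^(Suc k)"
proof (induction k)
  case 0 then show ?case by simp
next
  case (Suc k)
  have "s^(Suc (Suc k)) + real (Suc (Suc k)) * t * s^(Suc k)
      = s * (s^(Suc k) + real (Suc k) * t * s^k) + t * s^(Suc k)"
    by (simp add: algebra_simps)
  also have "\<dots> \<le> s * (s+t)^(Suc k) + t * (s+t)^(Suc k)"
    using Suc assms by (intro add_mono mult_left_mono power_mono) auto
  also have "\<dots> = (s+t)^(Suc (Suc k))" by (simp add: algebra_simps)
  finally show ?case .
qed

lemma esym_upper: "esym k N \<le> (real N * (real N + 1) / 2)^k / fact k"
proof (induction k N rule: esym.induct)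
  case (1 N) then show ?case by simp
next
  case (2 k) then show ?case by simp
next
  case (3 k N)
  define s where "s = real N * (real N + 1) / 2"
  have s0: "s \<ge> 0" by (simp add: s_def)
  have h1: "esym (Suc k) N \<le> s^(Suc k)/fact (Suc k)" using 3(1) unfolding s_def .
  have h2: "esym k N \<le> s^k/fact k" using 3(2) unfolding s_def .
  have "esym (Suc k) (Suc N) = esym (Suc k) N + real (Suc N) * esym k N" by simp
  also have "\<dots> \<le> s^(Suc k)/fact (Suc k) + real (Suc N) * (s^k / fact k)"
    by (intro add_mono mult_left_mono h1 h2) auto
  also have "\<dots> = (s^(Suc k) + real (Suc k) * real (Suc N) * s^k) / fact (Suc k)"
    by (simp add: field_simps del: of_nat_Suc)
  also have "\<dots> \<le> (s + real (Suc N))^(Suc k) / fact (Suc k)"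
    by (intro divide_right_mono) (use pow_add_ge[OF s0, of "real (Suc N)" k] in auto)
  also have "s + real (Suc N) = real (Suc N) * (real (Suc N) + 1) / 2"
    by (simp add: s_def field_simps)
  finally show ?case .
qed

definition esl :: "nat \<Rightarrow> nat \<Rightarrow> real" where
  "esl k N = (max 0 (real N - real k))^(2*k) / (2^k * fact k)"

lemma esl_nonneg: "esl k N \<ge> 0" by (simp add: esl_def)

lemma esym_lower: "esl k N \<le> esym k N"
proof (induction k N rule: esym.induct)
  case (1 N) then show ?case by (simp add: esl_def)
next
  case (2 k) then show ?case by (simp add: esl_def)
next
  case (3 k N)
  define u where "u = real N - real k"
  have key: "esl (Suc k) (Suc N) \<le> esl (Suc k) N + real (Suc N) * esl k N"
  proof (cases "u \<le> 0")
    case True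
    then have "esl (Suc k) (Suc N) = 0" by (simp add: esl_def u_def)
    then show ?thesis using esl_nonneg[of "Suc k" N] esl_nonneg[of k N] by simp
  next
    case False
    then have "k < N" unfolding u_def by linarith
    then have u1: "u \<ge> 1" unfolding u_def by linarith
    have e1: "esl (Suc k) (Suc N) = (u^2)^(Suc k) / (2^(Suc k) * fact (Suc k))"
      using u1 by (simp add: esl_def u_def power_mult power2_eq_square)
    have "real N - real (Suc k) = u - 1" by (simp add: u_def)
    then have e2: "esl (Suc k) N = ((u-1)^2)^(Suc k) / (2^(Suc k) * fact (Suc k))"
      using u1 unfolding esl_def by (simp only: power_mult)
    have e3: "esl k N = (u^2)^k / (2^k * fact k)"
      using u1 by (simp add: esl_def u_def power_mult power2_eq_square)
    have d: "(u^2)^(Suc k) - ((u-1)^2)^(Suc k) \<le> real (Suc k) * (u^2)^k * (u^2 - (u-1)^2)"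
      using u1 by (intro pow_diff_le) (auto simp: power2_eq_square mult_mono)
    have "u^2 - (u-1)^2 \<le> 2 * real (Suc N)"
      using u1 by (simp add: power2_eq_square u_def algebra_simps)
    then have "real (Suc k) * (u^2)^k * (u^2 - (u-1)^2) \<le> real (Suc k) * (u^2)^k * (2 * real (Suc N))"
      by (intro mult_left_mono) auto
    with d have "(u^2)^(Suc k) \<le> ((u-1)^2)^(Suc k) + real (Suc N) * (2 * real (Suc k) * (u^2)^k)"
      by (simp add: algebra_simps)
    then have "(u^2)^(Suc k) / (2^(Suc k) * fact (Suc k)) \<le>
        (((u-1)^2)^(Suc k) + real (Suc N) * (2 * real (Suc k) * (u^2)^k)) / (2^(Suc k) * fact (Suc k))"
      by (intro divide_right_mono) auto
    also have "\<dots> = ((u-1)^2)^(Suc k) / (2^(Suc k) * fact (Suc k)) + real (Suc N) * ((u^2)^k / (2^k * fact k))"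
      by (simp add: field_simps del: of_nat_Suc)
    finally show ?thesis using e1 e2 e3 by simp
  qed
  also have "\<dots> \<le> esym (Suc k) N + real (Suc N) * esym k N"
    using 3 by (intro add_mono mult_left_mono) auto
  finally show ?case by simp
qed

lemma esym_limit:
  "((\<lambda>N. esym k N * 2^k * fact k / real N ^ (2*k)) \<longlongrightarrow> 1) sequentially"
proof (rule real_tendsto_sandwich)
  show "eventually (\<lambda>N. (1 - real k / real N)^(2*k) \<le> esym k N * 2^k * fact k / real N ^ (2*k)) sequentially"
  proof (rule eventually_mono[OF eventually_ge_at_top[of "Suc k"]])
    fix N assume N: "Suc k \<le> N"
    have "1 - real k / real N = (real N - real k)/real N" using N by (simp add: field_simps)
    then have "(1 - real k / real N)^(2*k) = (real N - real k)^(2*k) / real N^(2*k)"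
      by (simp add: power_divide)
    also have "\<dots> = esl k N * 2^k * fact k / real N ^ (2*k)"
      using N by (simp add: esl_def)
    also have "\<dots> \<le> esym k N * 2^k * fact k / real N ^ (2*k)"
      using esym_lower[of k N] by (intro divide_right_mono mult_right_mono) auto
    finally show "(1 - real k / real N)^(2*k) \<le> esym k N * 2^k * fact k / real N ^ (2*k)" .
  qed
  show "eventually (\<lambda>N. esym k N * 2^k * fact k / real N ^ (2*k) \<le> (1 + 1 / real N)^k) sequentially"
  proof (rule eventually_mono[OF eventually_ge_at_top[of "Suc 0"]])
    fix N assume N: "Suc 0 \<le> N"
    have "esym k N * 2^k * fact k / real N ^ (2*k) \<le> (real N * (real N + 1) / 2)^k / fact k * 2^k * fact k / real N ^ (2*k)"
      using esym_upper[of k N] by (intro divide_right_mono mult_right_mono) auto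
    also have "\<dots> = (real N * (real N + 1))^k / (real N * real N)^k"
      by (simp add: power_divide power_mult_distrib power_mult power2_eq_square)
    also have "\<dots> = ((real N * (real N + 1)) / (real N * real N))^k"
      by (rule power_divide[symmetric])
    also have "(real N * (real N + 1)) / (real N * real N) = 1 + 1 / real N"
      using N by (simp add: field_simps)
    finally show "esym k N * 2^k * fact k / real N ^ (2*k) \<le> (1 + 1 / real N)^k" .
  qed
  have "((\<lambda>N. (1 - real k / real N)^(2*k)) \<longlongrightarrow> (1 - 0)^(2*k)) sequentially"
    by (intro tendsto_intros tendsto_divide_0[OF tendsto_const] filterlim_real_sequentially)
  then show "((\<lambda>N. (1 - real k / real N)^(2*k)) \<longlongrightarrow> 1) sequentially" by simp
  have "((\<lambda>N. (1 + 1 / real N)^k) \<longlongrightarrow> (1 + 0)^k) sequentially"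
    by (intro tendsto_intros tendsto_divide_0[OF tendsto_const] filterlim_real_sequentially)
  then show "((\<lambda>N. (1 + 1 / real N)^k) \<longlongrightarrow> 1) sequentially" by simp
qed


lemma rank_nth:
  fixes C :: "nat set"
  assumes "finite C" "j < card C"
  shows "card {c\<in>C. c < sorted_list_of_set C ! j} = j"
proof -
  let ?L = "sorted_list_of_set C"
  have len: "length ?L = card C" by simp
  have st: "sorted_wrt (<) ?L" by (rule strict_sorted_list_of_set)
  have lt: "?L ! i < ?L ! k" if "i < k" "k < length ?L" for i k
    using st that by (auto simp: sorted_wrt_iff_nth_less)
  have setL: "set ?L = C" using assms by simp
  have "{c\<in>C. c < ?L ! j} = (\<lambda>i. ?L ! i) ` {..<j}"
  proof
    show "{c\<in>C. c < ?L ! j} \<subseteq> (\<lambda>i. ?L ! i) ` {..<j}"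
    proof
      fix c assume c: "c \<in> {c\<in>C. c < ?L ! j}"
      then obtain i where i: "i < length ?L" "c = ?L ! i"
        using setL by (metis (no_types, lifting) in_set_conv_nth mem_Collect_eq)
      have "i < j"
      proof (rule ccontr)
        assume "\<not> i < j"
        then have "j = i \<or> j < i" by auto
        then have "?L ! j \<le> ?L ! i" using lt[of j i] i by (auto simp: less_imp_le)
        then show False using c i by auto
      qed
      then show "c \<in> (\<lambda>i. ?L ! i) ` {..<j}" using i by auto
    qed
    show "(\<lambda>i. ?L ! i) ` {..<j} \<subseteq> {c\<in>C. c < ?L ! j}"
      using lt assms len setL by (auto intro: nth_mem simp del: set_sorted_list_of_set)
  qed
  moreover have "inj_on (\<lambda>i. ?L ! i) {..<j}"
    using assms len by (intro inj_onI) (auto simp: nth_eq_iff_index_eq)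
  ultimately show ?thesis by (simp add: card_image)
qed

lemma nth_sorted_in:
  fixes C :: "nat set"
  assumes "finite C" "j < card C"
  shows "sorted_list_of_set C ! j \<in> C"
  using assms by (metis length_sorted_list_of_set nth_mem set_sorted_list_of_set)

lemma rank_unique:
  fixes C :: "nat set"
  assumes "finite C" "j < card C" "c \<in> C" "card {c'\<in>C. c' < c} = j"
  shows "c = sorted_list_of_set C ! j"
proof -
  obtain i where i: "i < card C" "c = sorted_list_of_set C ! i"
    using assms by (metis in_set_conv_nth length_sorted_list_of_set set_sorted_list_of_set)
  then have "i = j" using rank_nth[OF assms(1) i(1)] assms(4) by simp
  then show ?thesis using i by simp
qed

lemma prod_lower_fact: "(\<Prod>j\<in>{1..<m}. real (m - j)) = fact (m - 1)"
proof -
  have "(\<Prod>i\<in>{1..m-1}. real i) = (\<Prod>j\<in>{1..<m}. real (m - j))"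
    by (rule prod.reindex_bij_witness[of _ "\<lambda>j. m - j" "\<lambda>i. m - i"]) auto
  then show ?thesis by (simp add: fact_prod)
qed

lemma prod_upper_fact: "(\<Prod>j\<in>{m<..r}. real (j - m)) = fact (r - m)"
proof -
  have "(\<Prod>i\<in>{1..r-m}. real i) = (\<Prod>j\<in>{m<..r}. real (j - m))"
    by (rule prod.reindex_bij_witness[of _ "\<lambda>j. j - m" "\<lambda>i. i + m"]) auto
  then show ?thesis by (simp add: fact_prod)
qed

lemma prod_all_abs:
  assumes "m \<in> {1..r}"
  shows "(\<Prod>j\<in>{1..r}-{m}. \<bar>real j - real m\<bar>) = fact (m - 1) * fact (r - m)"
proof -
  have eq: "{1..r}-{m} = {1..<m} \<union> {m<..r}" using assms by auto
  have "(\<Prod>j\<in>{1..r}-{m}. \<bar>real j - real m\<bar>) =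
        (\<Prod>j\<in>{1..<m}. \<bar>real j - real m\<bar>) * (\<Prod>j\<in>{m<..r}. \<bar>real j - real m\<bar>)"
    unfolding eq by (intro prod.union_disjoint) auto
  also have "(\<Prod>j\<in>{1..<m}. \<bar>real j - real m\<bar>) = (\<Prod>j\<in>{1..<m}. real (m - j))"
    by (intro prod.cong) auto
  also have "(\<Prod>j\<in>{m<..r}. \<bar>real j - real m\<bar>) = (\<Prod>j\<in>{m<..r}. real (j - m))"
    by (intro prod.cong) auto
  finally show ?thesis unfolding prod_lower_fact prod_upper_fact .
qed

lemma pure_closed:
  assumes I: "I \<in> subsets_r n r" and n: "n \<ge> 1" and r: "r \<ge> n"
    and p: "p \<le> r - n" and q: "q \<in> {1..n}"
  shows "pure_diagram n r I p q =
     (if p + q \<notin> I \<and> card {i\<in>I. i < p + q} = q - 1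
      then fact (r - n) * (\<Prod>i\<in>I. \<bar>real i - real (p+q)\<bar>) / (fact (p+q-1) * fact (r - (p+q)))
      else 0)"
proof -
  define C where "C = {1..r} - I"
  define L where "L = sorted_list_of_set C"
  define m where "m = p + q"
  have IS: "I \<subseteq> {1..r}" "card I = n - 1" using I by (auto simp: subsets_r_def)
  have finI: "finite I" using IS finite_subset by blast
  have finC: "finite C" by (simp add: C_def)
  have cardC: "card C = r - n + 1"
    using IS r n unfolding C_def by (subst card_Diff_subset) (auto intro: finite_subset)
  have lenL: "length L = r - n + 1" by (simp add: L_def cardC)
  have pC: "p < card C" using p cardC by simp
  define d where "d = L ! p"
  have dC: "d \<in> C" unfolding d_def L_def by (rule nth_sorted_in[OF finC pC])
  have rk: "card {c\<in>C. c < d} = p" unfolding d_def L_def by (rule rank_nth[OF finC pC])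
  have split: "\<And>x. x \<in> {1..r} \<Longrightarrow> {c\<in>C. c < x} \<union> {i\<in>I. i < x} = {1..<x}"
    using IS by (auto simp: C_def)
  have cnt: "card {c\<in>C. c < x} + card {i\<in>I. i < x} = x - 1" if "x \<in> {1..r}" for x
  proof -
    have "card ({c\<in>C. c < x} \<union> {i\<in>I. i < x}) = card {c\<in>C. c < x} + card {i\<in>I. i < x}"
      by (intro card_Un_disjoint) (use finC finI in \<open>auto simp: C_def\<close>)
    then show ?thesis using split[OF that] by simp
  qed
  have dr: "d \<in> {1..r}" using dC by (simp add: C_def)
  have mr: "m \<in> {1..r}" using q p r by (auto simp: m_def)
  have cond: "(d = m) \<longleftrightarrow> (m \<notin> I \<and> card {i\<in>I. i < m} = q - 1)"
  proof
    assume "d = m"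
    then show "m \<notin> I \<and> card {i\<in>I. i < m} = q - 1"
      using dC cnt[OF dr] rk by (auto simp: C_def m_def)
  next
    assume h: "m \<notin> I \<and> card {i\<in>I. i < m} = q - 1"
    then have mC: "m \<in> C" using mr by (simp add: C_def)
    have "card {c\<in>C. c < m} = p" using cnt[OF mr] h q by (auto simp: m_def)
    then have "m = L ! p" unfolding L_def by (intro rank_unique[OF finC pC mC])
    then show "d = m" by (simp add: d_def)
  qed
  have dseq_eq: "dseq r I l = L ! l" for l by (simp add: dseq_def L_def C_def)
  have cond2: "(int q \<noteq> int (dseq r I p) - int p) \<longleftrightarrow> d \<noteq> m"
    by (auto simp: dseq_eq d_def m_def)
  show ?thesis
  proof (cases "d = m")
    case False
    then show ?thesis using cond cond2 unfolding m_def by (auto simp add: pure_diagram_def)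
  next
    case True
    have bij: "bij_betw (\<lambda>l. L ! l) ({0..r-n} - {p}) (C - {d})"
    proof -
      have b0: "bij_betw (\<lambda>l. L ! l) {0..r-n} C"
      proof (rule bij_betw_imageI)
        show "inj_on (\<lambda>l. L ! l) {0..r-n}"
          using lenL by (intro inj_onI) (auto simp: L_def nth_eq_iff_index_eq)
        have sL: "set L = C" using finC by (simp add: L_def)
        show "(\<lambda>l. L ! l) ` {0..r-n} = C"
        proof
          show "(\<lambda>l. L ! l) ` {0..r-n} \<subseteq> C" using lenL sL by (auto intro!: nth_mem[of _ L, simplified sL])
          show "C \<subseteq> (\<lambda>l. L ! l) ` {0..r-n}"
          proof
            fix c assume "c \<in> C"
            then obtain i where "i < length L" "L ! i = c" using sL by (metis in_set_conv_nth)
            then show "c \<in> (\<lambda>l. L ! l) ` {0..r-n}" using lenL by force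
          qed
        qed
      qed
      then show ?thesis unfolding d_def using p dC[unfolded d_def]
        by (intro bij_betw_DiffI) (auto intro: bij_betw_subset)
    qed
    have "(\<Prod>l\<in>{0..r-n} - {p}. 1 / \<bar>real (dseq r I l) - real (dseq r I p)\<bar>)
        = (\<Prod>c\<in>C - {d}. 1 / \<bar>real c - real d\<bar>)"
      unfolding dseq_eq d_def[symmetric]
      by (rule prod.reindex_bij_betw[OF bij, where g = "\<lambda>c. 1 / \<bar>real c - real d\<bar>"])
    also have "\<dots> = 1 / (\<Prod>c\<in>C - {d}. \<bar>real c - real d\<bar>)"
      by (simp add: prod_dividef)
    also have "(\<Prod>c\<in>C - {d}. \<bar>real c - real d\<bar>) =
        fact (m - 1) * fact (r - m) / (\<Prod>i\<in>I. \<bar>real i - real m\<bar>)"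
    proof -
      have mI: "m \<notin> I" using cond True by simp
      have "(\<Prod>j\<in>{1..r}-{m}. \<bar>real j - real m\<bar>) =
          (\<Prod>c\<in>C - {d}. \<bar>real c - real d\<bar>) * (\<Prod>i\<in>I. \<bar>real i - real m\<bar>)"
      proof -
        have "{1..r}-{m} = (C - {d}) \<union> I" using IS True mI by (auto simp: C_def)
        then show ?thesis using True finC finI
          by (simp only:) (rule prod.union_disjoint, auto simp: C_def)
      qed
      moreover have "(\<Prod>i\<in>I. \<bar>real i - real m\<bar>) \<noteq> 0"
        using mI finI by (auto simp: prod_zero_iff)
      ultimately show ?thesis using prod_all_abs[OF mr] by (simp add: field_simps)
    qed
    finally show ?thesis using cond cond2 True
      by (simp add: pure_diagram_def m_def)
  qed
qed


lemma ksub_insert: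
  fixes f :: "'a \<Rightarrow> real"
  assumes "finite F" "x \<notin> F"
  shows "(\<Sum>A\<in>{A. A \<subseteq> insert x F \<and> card A = Suc j}. \<Prod>i\<in>A. f i) =
         (\<Sum>A\<in>{A. A \<subseteq> F \<and> card A = Suc j}. \<Prod>i\<in>A. f i) +
         f x * (\<Sum>B\<in>{B. B \<subseteq> F \<and> card B = j}. \<Prod>i\<in>B. f i)"
proof -
  define S0 where "S0 = {A. A \<subseteq> F \<and> card A = Suc j}"
  define S1 where "S1 = {B. B \<subseteq> F \<and> card B = j}"
  have fin0: "finite S0" unfolding S0_def using assms(1)
    by (rule finite_subset[rotated, OF finite_Pow_iff[THEN iffD2]]) auto
  have fin1: "finite S1" unfolding S1_def using assms(1)
    by (rule finite_subset[rotated, OF finite_Pow_iff[THEN iffD2]]) auto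
  have eq: "{A. A \<subseteq> insert x F \<and> card A = Suc j} = S0 \<union> insert x ` S1"
  proof
    show "{A. A \<subseteq> insert x F \<and> card A = Suc j} \<subseteq> S0 \<union> insert x ` S1"
    proof
      fix A assume A: "A \<in> {A. A \<subseteq> insert x F \<and> card A = Suc j}"
      show "A \<in> S0 \<union> insert x ` S1"
      proof (cases "x \<in> A")
        case True
        have finA: "finite A" using A assms(1) finite_subset by auto
        have "A = insert x (A - {x})" using True by auto
        moreover have "A - {x} \<in> S1" using A True finA by (auto simp: S1_def)
        ultimately show ?thesis by blast
      next
        case False then show ?thesis using A by (auto simp: S0_def)
      qed
    qed
    show "S0 \<union> insert x ` S1 \<subseteq> {A. A \<subseteq> insert x F \<and> card A = Suc j}"
    proof
      fix A assume "A \<in> S0 \<union> insert x ` S1"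
      then show "A \<in> {A. A \<subseteq> insert x F \<and> card A = Suc j}"
      proof
        assume "A \<in> S0" then show ?thesis by (auto simp: S0_def)
      next
        assume "A \<in> insert x ` S1"
        then obtain B where B: "B \<in> S1" "A = insert x B" by auto
        have "finite B" using B assms(1) finite_subset by (auto simp: S1_def)
        moreover have "x \<notin> B" using B assms by (auto simp: S1_def)
        ultimately show ?thesis using B by (auto simp: S1_def)
      qed
    qed
  qed
  have disj: "S0 \<inter> insert x ` S1 = {}" using assms by (auto simp: S0_def)
  have inj: "inj_on (insert x) S1"
    using assms by (intro inj_onI) (auto simp: S1_def insert_ident)
  have "(\<Sum>A\<in>S0 \<union> insert x ` S1. \<Prod>i\<in>A. f i) = (\<Sum>A\<in>S0. \<Prod>i\<in>A. f i) + (\<Sum>A\<in>insert x ` S1. \<Prod>i\<in>A. f i)"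
    using fin0 fin1 disj by (intro sum.union_disjoint) auto
  also have "(\<Sum>A\<in>insert x ` S1. \<Prod>i\<in>A. f i) = (\<Sum>B\<in>S1. \<Prod>i\<in>insert x B. f i)"
    using inj by (simp add: sum.reindex)
  also have "\<dots> = (\<Sum>B\<in>S1. f x * (\<Prod>i\<in>B. f i))"
  proof (intro sum.cong refl)
    fix B assume B: "B \<in> S1"
    have "finite B" using B assms(1) finite_subset by (auto simp: S1_def)
    moreover have "x \<notin> B" using B assms by (auto simp: S1_def)
    ultimately show "(\<Prod>i\<in>insert x B. f i) = f x * (\<Prod>i\<in>B. f i)" by simp
  qed
  finally show ?thesis unfolding eq S0_def S1_def by (simp add: sum_distrib_left)
qed

lemma ksub_zero:
  assumes "finite F"
  shows "{A. A \<subseteq> F \<and> card A = 0} = {{}}"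
proof
  show "{A. A \<subseteq> F \<and> card A = 0} \<subseteq> {{}}"
  proof
    fix A assume A: "A \<in> {A. A \<subseteq> F \<and> card A = 0}"
    then have "finite A" using assms finite_subset by blast
    then show "A \<in> {{}}" using A by simp
  qed
qed auto

lemma esym_sum: "esym k N = (\<Sum>A\<in>{A. A \<subseteq> {1..N} \<and> card A = k}. \<Prod>i\<in>A. real i)"
proof (induction N arbitrary: k)
  case 0
  show ?case
  proof (cases k)
    case 0
    have "{A. A \<subseteq> {1..0::nat} \<and> card A = 0} = {{}}" by (rule ksub_zero) simp
    then show ?thesis using 0 by simp
  next
    case (Suc j)
    have "{A. A \<subseteq> {1..0::nat} \<and> card A = k} = {}" using Suc by auto
    then show ?thesis using Suc by simp
  qed
next
  case (Suc N)
  show ?case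
  proof (cases k)
    case 0 then show ?thesis by (simp add: ksub_zero)
  next
    case (Suc j)
    have "{1..Suc N} = insert (Suc N) {1..N}" by auto
    then show ?thesis using Suc.IH Suc
      by (simp add: ksub_insert)
  qed
qed

lemma ksub_reindex:
  fixes f :: "'a \<Rightarrow> real" and g :: "'b \<Rightarrow> 'a"
  assumes bij: "bij_betw g X Y"
  shows "(\<Sum>A\<in>{A. A \<subseteq> Y \<and> card A = k}. \<Prod>i\<in>A. f i) =
         (\<Sum>B\<in>{B. B \<subseteq> X \<and> card B = k}. \<Prod>j\<in>B. f (g j))"
proof -
  have inj: "inj_on g X" and im: "g ` X = Y" using bij by (auto simp: bij_betw_def)
  have injv: "inj_on (inv_into X g) Y" using inj im by (simp add: inj_on_inv_into)
  show ?thesis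
  proof (rule sym, rule sum.reindex_bij_witness[where j="\<lambda>B. g ` B" and i="\<lambda>A. inv_into X g ` A"])
    fix A assume A: "A \<in> {A. A \<subseteq> Y \<and> card A = k}"
    then show "g ` inv_into X g ` A = A" using im by (auto simp: image_inv_into_cancel)
    have "inv_into X g ` A \<subseteq> X" using A im by (auto intro: inv_into_into)
    moreover have "card (inv_into X g ` A) = k"
      using A by (subst card_image) (auto intro: inj_on_subset[OF injv])
    ultimately show "inv_into X g ` A \<in> {B. B \<subseteq> X \<and> card B = k}" by simp
  next
    fix B assume B: "B \<in> {B. B \<subseteq> X \<and> card B = k}"
    then show "inv_into X g ` g ` B = B" using inj by (auto simp: inv_into_image_cancel)
    have "g ` B \<subseteq> Y" using B im by auto
    moreover have "card (g ` B) = k"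
      using B by (subst card_image) (auto intro: inj_on_subset[OF inj])
    ultimately show "g ` B \<in> {A. A \<subseteq> Y \<and> card A = k}" by simp
    show "(\<Prod>i\<in>g ` B. f i) = (\<Prod>j\<in>B. f (g j))"
      using B by (subst prod.reindex) (auto intro: inj_on_subset[OF inj])
  qed
qed

lemma sumA_lower:
  "(\<Sum>A\<in>{A. A \<subseteq> {1..<m} \<and> card A = k}. \<Prod>i\<in>A. \<bar>real i - real m\<bar>) = esym k (m - 1)"
proof -
  have bij: "bij_betw (\<lambda>j. m - j) {1..m-1} {1..<m}"
    by (rule bij_betw_byWitness[of _ "\<lambda>j. m - j"]) auto
  show ?thesis
    unfolding ksub_reindex[OF bij] esym_sum
    by (intro sum.cong refl prod.cong) (auto simp: subset_iff of_nat_diff)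
qed

lemma sumB_upper:
  "(\<Sum>B\<in>{B. B \<subseteq> {m<..r} \<and> card B = k}. \<Prod>i\<in>B. \<bar>real i - real m\<bar>) = esym k (r - m)"
proof -
  have bij: "bij_betw (\<lambda>j. j + m) {1..r-m} {m<..r}"
    by (rule bij_betw_byWitness[of _ "\<lambda>j. j - m"]) auto
  show ?thesis
    unfolding ksub_reindex[OF bij] esym_sum
    by (intro sum.cong refl prod.cong) auto
qed

definition Kc :: "nat \<Rightarrow> nat \<Rightarrow> nat \<Rightarrow> real" where
  "Kc n r m = fact (r - n) / (fact (m - 1) * fact (r - m))"

lemma Kc_pos: "Kc n r m > 0" by (simp add: Kc_def)

lemma pure_nonneg:
  assumes "I \<in> subsets_r n r" "n \<ge> 1" "r \<ge> n" "p \<le> r - n" "q \<in> {1..n}"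
  shows "pure_diagram n r I p q \<ge> 0"
  using pure_closed[OF assms] by (simp add: prod_nonneg)

lemma pure_le:
  assumes "I \<in> subsets_r n r" "n \<ge> 1" "r \<ge> n" "p \<le> r - n" "q \<in> {1..n}"
  shows "pure_diagram n r I p q \<le> Kc n r (p+q) * real r ^ (n - 1)"
proof -
  have IS: "I \<subseteq> {1..r}" "card I = n - 1" using assms(1) by (auto simp: subsets_r_def)
  have mr: "p + q \<le> r" using assms by auto
  have "(\<Prod>i\<in>I. \<bar>real i - real (p+q)\<bar>) \<le> (\<Prod>i\<in>I. real r)"
    using IS mr by (intro prod_mono) (auto simp: subset_iff abs_le_iff)
  also have "\<dots> = real r ^ (n - 1)" using IS by simp
  finally have h: "(\<Prod>i\<in>I. \<bar>real i - real (p+q)\<bar>) \<le> real r ^ (n - 1)" .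
  have "fact (r - n) * (\<Prod>i\<in>I. \<bar>real i - real (p+q)\<bar>) / (fact (p+q-1) * fact (r - (p+q)))
     = Kc n r (p+q) * (\<Prod>i\<in>I. \<bar>real i - real (p+q)\<bar>)" by (simp add: Kc_def)
  also have "\<dots> \<le> Kc n r (p+q) * real r ^ (n - 1)"
    using h Kc_pos[of n r "p+q"] by (intro mult_left_mono) auto
  finally show ?thesis using pure_closed[OF assms] Kc_pos[of n r "p+q"]
    by (auto simp: zero_le_mult_iff)
qed

lemma sum_pure:
  assumes n: "n \<ge> 1" and r: "r \<ge> n" and p: "p \<le> r - n" and q: "q \<in> {1..n}"
  shows "(\<Sum>I\<in>subsets_r n r. pure_diagram n r I p q) =
         Kc n r (p+q) * esym (q - 1) (p + q - 1) * esym (n - q) (r - (p + q))"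
proof -
  define m where "m = p + q"
  define T where "T = {I\<in>subsets_r n r. m \<notin> I \<and> card {i\<in>I. i < m} = q - 1}"
  define SA where "SA = {A. A \<subseteq> {1..<m} \<and> card A = q - 1}"
  define SB where "SB = {B. B \<subseteq> {m<..r} \<and> card B = n - q}"
  have finS: "finite (subsets_r n r)" unfolding subsets_r_def
    by (rule finite_subset[of _ "Pow {1..r}"]) auto
  have finSA: "finite SA" unfolding SA_def by (rule finite_subset[of _ "Pow {1..<m}"]) auto
  have finSB: "finite SB" unfolding SB_def by (rule finite_subset[of _ "Pow {m<..r}"]) auto
  have TS: "T \<subseteq> subsets_r n r" by (auto simp: T_def)
  have "(\<Sum>I\<in>subsets_r n r. pure_diagram n r I p q) =
        (\<Sum>I\<in>T. Kc n r m * (\<Prod>i\<in>I. \<bar>real i - real m\<bar>))"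
  proof (rule sym, rule sum.mono_neutral_cong_left[OF finS TS])
    show "\<forall>I\<in>subsets_r n r - T. pure_diagram n r I p q = 0"
      using pure_closed[OF _ n r p q] by (auto simp: T_def m_def)
    show "\<And>I. I \<in> T \<Longrightarrow> Kc n r m * (\<Prod>i\<in>I. \<bar>real i - real m\<bar>) = pure_diagram n r I p q"
      using pure_closed[OF _ n r p q] by (auto simp: T_def m_def Kc_def)
  qed
  also have "(\<Sum>I\<in>T. Kc n r m * (\<Prod>i\<in>I. \<bar>real i - real m\<bar>)) =
        (\<Sum>(A,B)\<in>SA \<times> SB. Kc n r m * ((\<Prod>i\<in>A. \<bar>real i - real m\<bar>) * (\<Prod>i\<in>B. \<bar>real i - real m\<bar>)))"
  proof (rule sum.reindex_bij_witness[where j="\<lambda>I. (I \<inter> {..<m}, I \<inter> {m<..})" and i="\<lambda>(A,B). A \<union> B"])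
    fix I assume I: "I \<in> T"
    then have mI: "m \<notin> I" by (simp add: T_def)
    have tri: "x < m \<or> m < x" if "x \<in> I" for x using mI that by (cases "x = m") auto
    show "(case (I \<inter> {..<m}, I \<inter> {m<..}) of (A, B) \<Rightarrow> A \<union> B) = I" using tri by auto
    have IS: "I \<subseteq> {1..r}" "card I = n - 1" using I by (auto simp: T_def subsets_r_def)
    have finI: "finite I" using IS finite_subset by blast
    have c1: "card (I \<inter> {..<m}) = q - 1"
    proof -
      have "I \<inter> {..<m} = {i\<in>I. i < m}" by auto
      then show ?thesis using I by (simp add: T_def)
    qed
    have "card I = card (I \<inter> {..<m}) + card (I \<inter> {m<..})"
    proof -
      have "I = (I \<inter> {..<m}) \<union> (I \<inter> {m<..})" using tri by auto
      then have "card I = card ((I \<inter> {..<m}) \<union> (I \<inter> {m<..}))" by simp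
      also have "\<dots> = card (I \<inter> {..<m}) + card (I \<inter> {m<..})"
        using finI by (intro card_Un_disjoint) auto
      finally show ?thesis .
    qed
    then have c2: "card (I \<inter> {m<..}) = n - q" using IS c1 q by auto
    show "(I \<inter> {..<m}, I \<inter> {m<..}) \<in> SA \<times> SB"
      using IS c1 c2 by (auto simp: SA_def SB_def)
    show "(case (I \<inter> {..<m}, I \<inter> {m<..}) of (A, B) \<Rightarrow>
            Kc n r m * ((\<Prod>i\<in>A. \<bar>real i - real m\<bar>) * (\<Prod>i\<in>B. \<bar>real i - real m\<bar>))) =
          Kc n r m * (\<Prod>i\<in>I. \<bar>real i - real m\<bar>)"
    proof -
      have "(\<Prod>i\<in>I. \<bar>real i - real m\<bar>) = (\<Prod>i\<in>(I \<inter> {..<m}) \<union> (I \<inter> {m<..}). \<bar>real i - real m\<bar>)"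
        using tri by (intro prod.cong) auto
      also have "\<dots> = (\<Prod>i\<in>I \<inter> {..<m}. \<bar>real i - real m\<bar>) * (\<Prod>i\<in>I \<inter> {m<..}. \<bar>real i - real m\<bar>)"
        using finI by (intro prod.union_disjoint) auto
      finally show ?thesis by simp
    qed
  next
    fix AB assume AB: "AB \<in> SA \<times> SB"
    obtain A B where AB': "AB = (A, B)" by (cases AB)
    have A: "A \<subseteq> {1..<m}" "card A = q - 1" and B: "B \<subseteq> {m<..r}" "card B = n - q"
      using AB AB' by (auto simp: SA_def SB_def)
    have finA: "finite A" using A finite_subset by blast
    have finB: "finite B" using B finite_subset by blast
    show "((case AB of (A, B) \<Rightarrow> A \<union> B) \<inter> {..<m}, (case AB of (A, B) \<Rightarrow> A \<union> B) \<inter> {m<..}) = AB"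
      unfolding AB' using A B by auto
    have disj: "A \<inter> B = {}"
    proof (rule ccontr)
      assume "A \<inter> B \<noteq> {}"
      then obtain x where "x \<in> A" "x \<in> B" by blast
      then have "x < m" "m < x" using A(1) B(1) by auto
      then show False by simp
    qed
    have cU: "card (A \<union> B) = n - 1"
      using A B finA finB q disj by (subst card_Un_disjoint) auto
    have mr: "m \<le> r" using p q r by (auto simp: m_def)
    have sub: "A \<union> B \<subseteq> {1..r}"
    proof
      fix x assume "x \<in> A \<union> B"
      then show "x \<in> {1..r}" using A(1) B(1) mr by (auto simp: subset_iff)
    qed
    have "{i\<in>A \<union> B. i < m} = A" using A B by auto
    then show "(case AB of (A, B) \<Rightarrow> A \<union> B) \<in> T"
      unfolding AB' using A B cU sub by (auto simp: T_def subsets_r_def m_def)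
  qed
  also have "\<dots> = (\<Sum>A\<in>SA. \<Sum>B\<in>SB. Kc n r m * ((\<Prod>i\<in>A. \<bar>real i - real m\<bar>) * (\<Prod>i\<in>B. \<bar>real i - real m\<bar>)))"
    by (simp add: sum.cartesian_product)
  also have "\<dots> = Kc n r m * ((\<Sum>A\<in>SA. \<Prod>i\<in>A. \<bar>real i - real m\<bar>) * (\<Sum>B\<in>SB. \<Prod>i\<in>B. \<bar>real i - real m\<bar>))"
    by (subst sum_product) (simp add: sum_distrib_left)
  also have "(\<Sum>A\<in>SA. \<Prod>i\<in>A. \<bar>real i - real m\<bar>) = esym (q - 1) (m - 1)"
    unfolding SA_def by (rule sumA_lower)
  also have "(\<Sum>B\<in>SB. \<Prod>i\<in>B. \<bar>real i - real m\<bar>) = esym (n - q) (r - m)"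
    unfolding SB_def by (rule sumB_upper)
  finally show ?thesis by (simp add: m_def)
qed


lemma lin_inf: "filterlim (\<lambda>n. 2*real n + c) at_infinity sequentially"
proof -
  have "filterlim (\<lambda>n. 2*real n) at_top sequentially"
    by (rule filterlim_tendsto_pos_mult_at_top[OF tendsto_const]) (auto simp: filterlim_real_sequentially)
  then have "filterlim (\<lambda>n. c + 2*real n) at_top sequentially"
    by (rule filterlim_tendsto_add_at_top[OF tendsto_const])
  then show ?thesis by (intro filterlim_at_top_imp_at_infinity) (simp add: add.commute)
qed

definition cc :: "nat \<Rightarrow> real" where "cc n = real ((2*n) choose n) / 4^n"

lemma cc_pos: "cc n > 0" by (simp add: cc_def)

lemma choose_odd_rel: "real ((2*n+1) choose (n+1)) = real ((2*n) choose n) * (2*real n+1)/(real n+1)"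
proof -
  have h: "Suc n * (Suc (2*n) choose Suc n) = Suc (2*n) * ((2*n) choose n)"
    by (rule Suc_times_binomial)
  have "real (Suc n * (Suc (2*n) choose Suc n)) = real (Suc (2*n) * ((2*n) choose n))"
    by (simp only: h)
  then have "(real n + 1) * real ((2*n+1) choose (n+1)) = (2*real n+1) * real ((2*n) choose n)"
    by (simp only: of_nat_mult Suc_eq_plus1 of_nat_add of_nat_1 of_nat_mult of_nat_numeral)
  then show ?thesis
    by (metis nonzero_mult_div_cancel_left mult.commute times_divide_eq_right of_nat_Suc Suc_eq_plus1 add.commute
        of_nat_0_less_iff zero_less_Suc less_irrefl)
qed
lemma even_aux:
  fixes B0 B1 B2 x :: real assumes "x \<ge> 0" "(x+1)*B2 = (2*x+2)*B1" "B1 = B0*(2*x+1)/(x+1)"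
  shows "B2 = B0*2*(2*x+1)/(x+1)"
proof -
  have "x + 1 \<noteq> 0" using assms by auto
  have "(x+1)*B2 = (x+1)*(2*B1)" using assms(2) by (simp add: algebra_simps)
  then have "B2 = 2*B1" using \<open>x+1\<noteq>0\<close> by simp
  then show ?thesis using assms(3) by simp
qed

lemma choose_even_rel: "real ((2*n+2) choose (n+1)) = real ((2*n) choose n) * 2*(2*real n+1)/(real n+1)"
proof -
  have h: "Suc n * (Suc (2*n+1) choose Suc n) = Suc (2*n+1) * ((2*n+1) choose n)"
    by (rule Suc_times_binomial)
  have sym: "(2*n+1) choose n = (2*n+1) choose (n+1)"
    using binomial_symmetric[of n "2*n+1"] by simp
  have e: "2*n+1+1 = 2*n+2" by simp
  have "real (Suc n * (Suc (2*n+1) choose Suc n)) = real (Suc (2*n+1) * ((2*n+1) choose (n+1)))"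
    by (simp only: h sym)
  then have "(real n + 1) * real ((2*n+2) choose (n+1)) = (2*real n+2) * real ((2*n+1) choose (n+1))"
    by (simp only: of_nat_mult Suc_eq_plus1 e of_nat_add of_nat_1 of_nat_mult of_nat_numeral)
  then show ?thesis using choose_odd_rel[of n] by (intro even_aux) auto
qed

lemma cc_rec_aux:
  fixes b x y :: real assumes "x \<ge> 0" "y > 0"
  shows "b*2*(2*x+1)/(x+1)/(4*y) = b/y*(2*x+1)/(2*x+2)"
  by simp

lemma cc_rec: "cc (Suc n) = cc n * (2*real n+1)/(2*real n+2)"
proof -
  have "2 * Suc n = 2*n+2" by simp
  then have "cc (Suc n) = real ((2*n) choose n) * 2*(2*real n+1)/(real n+1) / (4 * 4^n)"
    unfolding cc_def using choose_even_rel[of n] by (simp del: of_nat_Suc)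
  also have "\<dots> = cc n * (2*real n+1)/(2*real n+2)"
    unfolding cc_def by (rule cc_rec_aux) auto
  finally show ?thesis .
qed

lemma wallis_aux0:
  fixes P c uu vv ww :: real assumes "uu \<noteq> 0" "vv \<noteq> 0" "ww \<noteq> 0"
  shows "P * (ww / (uu * vv)) * (c^2 * uu^2 / ww) * vv = P * c^2 * uu"
  using assms by (simp add: field_simps power2_eq_square)

lemma wallis_aux:
  fixes P c x :: real assumes "x \<ge> 0"
  shows "P * (4*(x+1)^2/((2*x+1)*(2*x+3))) * (c * (2*x+1)/(2*x+2))^2 * (2*x+3) = P*c^2*(2*x+1)"
proof -
  have "(c*(2*x+1)/(2*x+2))^2 = c^2*(2*x+1)^2/(4*(x+1)^2)"
    by (simp add: power_divide power_mult_distrib power2_eq_square algebra_simps)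
  moreover have "4*(x+1)^2 \<noteq> 0" "2*x+1 \<noteq> 0" "2*x+3 \<noteq> 0" using assms by auto
  ultimately show ?thesis using wallis_aux0[of "2*x+1" "2*x+3" "4*(x+1)^2" P c] by simp
qed

lemma wallis_cc: "(\<Prod>k=1..n. (4*real k^2) / (4*real k^2 - 1)) * (cc n)^2 * (2*real n+1) = 1"
proof (induction n)
  case 0 then show ?case by (simp add: cc_def)
next
  case (Suc n)
  define P where "P = (\<Prod>k=1..n. (4*real k^2) / (4*real k^2 - 1))"
  define c where "c = cc n"
  define x where "x = real n"
  have x0: "x \<ge> 0" by (simp add: x_def)
  have "(\<Prod>k=1..Suc n. (4*real k^2) / (4*real k^2 - 1)) =
      P * ((4*real (Suc n)^2) / (4*real (Suc n)^2 - 1))"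
    unfolding P_def by (subst prod.nat_ivl_Suc') (simp, rule mult.commute)
  also have "(4*real (Suc n)^2) / (4*real (Suc n)^2 - 1) = 4*(x+1)^2/((2*x+1)*(2*x+3))"
    by (simp add: x_def power2_eq_square algebra_simps)
  finally have e1: "(\<Prod>k=1..Suc n. (4*real k^2) / (4*real k^2 - 1)) = P * (4*(x+1)^2/((2*x+1)*(2*x+3)))" .
  have e2: "cc (Suc n) = c * (2*x+1)/(2*x+2)" by (simp add: cc_rec c_def x_def)
  have e3: "2*real (Suc n)+1 = 2*x+3" by (simp add: x_def)
  have IH: "P * c^2 * (2*x+1) = 1" using Suc by (simp add: P_def c_def x_def)
  show ?case unfolding e1 e2 e3 wallis_aux[OF x0] by (rule IH)
qed

lemma cc_lim: "(\<lambda>n. cc n * sqrt (2*real n)) \<longlonglongrightarrow> sqrt (2/pi)"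
proof -
  define P where "P n = (\<Prod>k=1..n. (4*real k^2) / (4*real k^2 - 1))" for n
  have P: "P \<longlonglongrightarrow> pi/2" unfolding P_def by (rule wallis)
  have Ppos: "P n \<noteq> 0" for n using wallis_cc[of n, folded P_def] by (metis mult_zero_left zero_neq_one)
  have eq1: "cc n * sqrt (2*real n + 1) = sqrt (1 / P n)" for n
  proof -
    have w: "P n * ((cc n)^2 * (2*real n+1)) = 1" using wallis_cc[of n, folded P_def] by (simp only: mult.assoc)
    then have "(cc n)^2 * (2*real n+1) = 1 / P n" using Ppos[of n] by (simp add: eq_divide_eq mult.commute)
    then have "sqrt ((cc n)^2 * (2*real n+1)) = sqrt (1 / P n)" by simp
    moreover have "sqrt ((cc n)^2 * (2*real n+1)) = cc n * sqrt (2*real n + 1)"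
      using cc_pos[of n] by (simp add: real_sqrt_mult)
    ultimately show ?thesis by simp
  qed
  have "(\<lambda>n. sqrt (1 / P n) * sqrt (2*real n / (2*real n + 1))) \<longlonglongrightarrow> sqrt (1 / (pi/2)) * sqrt 1"
  proof (intro tendsto_intros P)
    show "pi / 2 \<noteq> 0" by simp
    have "(\<lambda>n. 1 - 1 / (2*real n + 1)) \<longlonglongrightarrow> 1 - 0"
      by (intro tendsto_intros tendsto_divide_0[OF tendsto_const])
         (rule lin_inf)
    moreover have "1 - 1 / (2*real n + 1) = 2*real n / (2*real n + 1)" for n
      by (simp add: field_simps)
    ultimately show "(\<lambda>n. 2*real n / (2*real n + 1)) \<longlonglongrightarrow> 1" by simp
  qed
  moreover have "sqrt (1 / P n) * sqrt (2*real n / (2*real n + 1)) = cc n * sqrt (2*real n)" for n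
  proof -
    have "sqrt (1 / P n) * sqrt (2*real n / (2*real n + 1)) =
        cc n * sqrt (2*real n + 1) * sqrt (2*real n / (2*real n + 1))" by (simp add: eq1)
    also have "\<dots> = cc n * sqrt ((2*real n + 1) * (2*real n / (2*real n + 1)))"
      by (metis mult.assoc real_sqrt_mult)
    also have "(2*real n + 1) * (2*real n / (2*real n + 1)) = 2 * real n"
      by (simp add: field_simps)
    finally show ?thesis .
  qed
  moreover have "sqrt (1 / (pi/2)) * sqrt 1 = sqrt (2/pi)" by simp
  ultimately show ?thesis by simp
qed

lemma cen_aux:
  fixes b s x y :: real assumes "x \<ge> 0" "y > 0"
  shows "b * (2*x+1) / (x+1) * s / (2*y) = (b / y * s) * ((2*x+1) / (2*x+2))"
proof -
  have "2*x+2 = 2*(x+1)" by simp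
  then show ?thesis using assms by (simp add: divide_simps)
qed

lemma sqrt_aux:
  fixes x :: real assumes "x > 0"
  shows "sqrt (2*x) * sqrt ((2*x + 1) / (2*x)) = sqrt (2*x + 1)"
  using assms by (simp add: real_sqrt_mult[symmetric])

definition cen :: "nat \<Rightarrow> real" where
  "cen N = real (N choose ((N+1) div 2)) * sqrt (real N) / 2^N"

lemma cen_lim: "cen \<longlonglongrightarrow> sqrt (2/pi)"
proof (rule limseq_even_odd)
  have "cen (2*n) = cc n * sqrt (2*real n)" for n
    by (simp add: cen_def cc_def power_mult)
  then show "(\<lambda>n. cen (2*n)) \<longlonglongrightarrow> sqrt (2/pi)" using cc_lim by simp
  have e: "cen (2*n+1) = (cc n * sqrt (2*real n + 1)) * ((2*real n+1)/(2*real n+2))" for n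
  proof -
    have "(2*n+1+1) div 2 = n+1" by simp
    then have "cen (2*n+1) = real ((2*n+1) choose (n+1)) * sqrt (real (2*n+1)) / 2^(2*n+1)"
      unfolding cen_def by simp
    also have "\<dots> = real ((2*n) choose n) * (2*real n+1)/(real n+1) * sqrt (2*real n+1) / (2*4^n)"
      unfolding choose_odd_rel by (simp add: power_mult)
    also have "\<dots> = (cc n * sqrt (2*real n + 1)) * ((2*real n+1)/(2*real n+2))"
      unfolding cc_def by (rule cen_aux) auto
    finally show ?thesis .
  qed
  have l1: "(\<lambda>n. cc n * sqrt (2*real n + 1)) \<longlonglongrightarrow> sqrt (2/pi)"
  proof -
    have "(\<lambda>n. cc n * sqrt (2*real n) * sqrt ((2*real n + 1) / (2*real n))) \<longlonglongrightarrow> sqrt (2/pi) * sqrt 1"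
    proof (intro tendsto_intros cc_lim)
      have "filterlim (\<lambda>n. 2*real n) at_top sequentially"
        by (rule filterlim_tendsto_pos_mult_at_top[OF tendsto_const]) (auto simp: filterlim_real_sequentially)
      then have "(\<lambda>n. 1 + 1 / (2*real n)) \<longlonglongrightarrow> 1 + 0"
        by (intro tendsto_intros tendsto_divide_0[OF tendsto_const] filterlim_at_top_imp_at_infinity)
      moreover have "eventually (\<lambda>n. 1 + 1 / (2*real n) = (2*real n + 1) / (2*real n)) sequentially"
        using eventually_gt_at_top[of 0] by eventually_elim (simp add: field_simps)
      ultimately show "(\<lambda>n. (2*real n + 1) / (2*real n)) \<longlonglongrightarrow> 1"
        by (simp add: tendsto_cong)
    qed
    moreover have "eventually (\<lambda>n. cc n * sqrt (2*real n) * sqrt ((2*real n + 1) / (2*real n)) = cc n * sqrt (2*real n + 1)) sequentially"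
      using eventually_gt_at_top[of 0]
    proof eventually_elim
      case (elim n)
      have "sqrt (2*real n) * sqrt ((2*real n + 1) / (2*real n)) = sqrt (2*real n + 1)"
        using elim by (intro sqrt_aux) simp
      then show ?case by (simp add: mult.assoc)
    qed
    ultimately show ?thesis by (simp add: tendsto_cong)
  qed
  have l2: "(\<lambda>n. (2*real n+1)/(2*real n+2)) \<longlonglongrightarrow> 1"
  proof -
    have "(\<lambda>n. 1 - 1/(2*real n+2)) \<longlonglongrightarrow> 1 - 0"
      by (intro tendsto_intros tendsto_divide_0[OF tendsto_const])
         (rule lin_inf)
    moreover have "1 - 1/(2*real n+2) = (2*real n+1)/(2*real n+2)" for n by (simp add: field_simps)
    ultimately show ?thesis by simp
  qed
  show "(\<lambda>n. cen (2*n+1)) \<longlonglongrightarrow> sqrt (2/pi)"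
    unfolding e using tendsto_mult[OF l1 l2] by simp
qed


lemma choose_step: "real (Suc k) * real (N choose Suc k) = real (N - k) * real (N choose k)"
proof -
  have "Suc k * (N choose Suc k) = (N - k) * (N choose k)"
    using binomial_absorption[of k N] binomial_absorb_comp[of N k] by simp
  then show ?thesis by (metis of_nat_mult)
qed

lemma solve_aux: fixes a y c w :: real shows "a > 0 \<Longrightarrow> a * y = c * w \<Longrightarrow> y = w * (c / a)"
  by (simp add: field_simps)

lemma choose_prod:
  assumes "B + h \<le> N"
  shows "real (N choose (B + h)) = real (N choose B) * (\<Prod>j<h. (real N - real B - real j) / (real B + real j + 1))"
  using assms
proof (induction h)
  case 0 then show ?case by simp
next
  case (Suc h)
  have s: "real (Suc (B+h)) * real (N choose Suc (B+h)) = real (N - (B+h)) * real (N choose (B+h))"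
    by (rule choose_step)
  have e1: "B + Suc h = Suc (B+h)" by simp
  have e2: "real (N - (B+h)) = real N - real B - real h" using Suc.prems by (simp add: of_nat_diff)
  have e3: "real (Suc (B+h)) = real B + real h + 1" by simp
  have step: "real (N choose (B + Suc h)) = real (N choose (B+h)) * ((real N - real B - real h) / (real B + real h + 1))"
    unfolding e1 by (rule solve_aux) (use s e2 e3 in \<open>simp_all add: algebra_simps\<close>)
  have IH: "real (N choose (B + h)) = real (N choose B) * (\<Prod>j<h. (real N - real B - real j) / (real B + real j + 1))"
    using Suc by simp
  show ?case unfolding step IH prod.lessThan_Suc by (simp only: mult.assoc)
qed

lemma sum_odd: "(\<Sum>j<h. 2 * real j + 1) = real h ^ 2"
  by (induction h) (auto simp: power2_eq_square algebra_simps)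

lemma sum_even: "(\<Sum>j<h. 2 * real j + 2) = real h * (real h + 1)"
  by (induction h) (auto simp: algebra_simps)

lemma ratio_bounds:
  fixes N M :: nat
  defines "A \<equiv> N div 2" and "B \<equiv> N - N div 2"
  defines "h \<equiv> M - (N - N div 2)"
  assumes NM: "N \<le> 2 * M" "M \<le> N" and N1: "N \<ge> 1"
  shows "exp (- (real h * (real h + 1)) / (real A - real h + 1)) \<le> real (N choose M) / real (N choose B)"
    and "real (N choose M) / real (N choose B) \<le> exp (- (real h ^ 2) / (real B + real h))"
proof -
  have AB: "A + B = N" "A \<le> B" "B \<le> A + 1" by (auto simp: A_def B_def)
  have Mh: "M = B + h" using NM by (auto simp: h_def B_def)
  have hA: "h \<le> A" using NM AB Mh by auto
  have B1: "B \<ge> 1" using N1 by (auto simp: B_def)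
  have Cpos: "real (N choose B) > 0" using AB by simp
  define t where "t j = (real N - real B - real j) / (real B + real j + 1)" for j
  have ratio: "real (N choose M) / real (N choose B) = (\<Prod>j<h. t j)"
  proof -
    have "real (N choose M) = real (N choose B) * (\<Prod>j<h. t j)"
      unfolding Mh t_def by (rule choose_prod) (use Mh NM in simp)
    then show ?thesis using Cpos by simp
  qed
  have NAB: "real N - real B = real A" using AB by (metis add_diff_cancel_right' of_nat_add)
  have tpos: "t j > 0" if "j < h" for j using that hA NAB by (simp add: t_def)
  have up: "t j \<le> exp (- (2 * real j + 1) / (real B + real h))" if "j < h" for j
  proof -
    have "t j \<le> exp (t j - 1)" using exp_ge_add_one_self[of "t j - 1"] by simp
    also have "t j - 1 = - ((real B - real A + 2 * real j + 1) / (real B + real j + 1))"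
      unfolding t_def NAB by (simp add: field_simps)
    also have "\<dots> \<le> - ((2 * real j + 1) / (real B + real h))"
    proof -
      have "(2 * real j + 1) / (real B + real h) \<le> (2 * real j + 1) / (real B + real j + 1)"
        using that by (intro divide_left_mono) auto
      also have "\<dots> \<le> (real B - real A + 2 * real j + 1) / (real B + real j + 1)"
        using AB by (intro divide_right_mono) auto
      finally show ?thesis by linarith
    qed
    also have "- ((2 * real j + 1) / (real B + real h)) = - (2 * real j + 1) / (real B + real h)"
      by (rule minus_divide_left)
    finally show ?thesis by simp
  qed
  have lo: "exp (- (2 * real j + 2) / (real A - real h + 1)) \<le> t j" if "j < h" for j
  proof -
    have tp: "t j > 0" using tpos that .
    have "1 / t j \<le> exp (1 / t j - 1)" using exp_ge_add_one_self[of "1 / t j - 1"] by simp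
    then have "inverse (exp (1 / t j - 1)) \<le> inverse (1 / t j)"
      using tp by (intro le_imp_inverse_le) auto
    moreover have "inverse (exp (1 / t j - 1)) = exp (1 - 1 / t j)"
      by (simp add: exp_minus[symmetric])
    ultimately have "exp (1 - 1 / t j) \<le> t j" using tp by simp
    moreover have "- (2 * real j + 2) / (real A - real h + 1) \<le> 1 - 1 / t j"
    proof -
      have Aj: "real A - real j > 0" using that hA by simp
      have "1 - 1 / t j = - ((real B - real A + 2 * real j + 1) / (real A - real j))"
        using Aj unfolding t_def NAB by (simp add: field_simps)
      moreover have "(real B - real A + 2 * real j + 1) / (real A - real j) \<le> (2 * real j + 2) / (real A - real j)"
        using AB Aj by (intro divide_right_mono) auto
      moreover have "(2 * real j + 2) / (real A - real j) \<le> (2 * real j + 2) / (real A - real h + 1)"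
        using that hA by (intro divide_left_mono) auto
      moreover have "- (2 * real j + 2) / (real A - real h + 1) = - ((2 * real j + 2) / (real A - real h + 1))"
        by (rule minus_divide_left[symmetric])
      ultimately show ?thesis by linarith
    qed
    ultimately show ?thesis by (meson exp_le_cancel_iff order_trans)
  qed
  have "(\<Prod>j<h. t j) \<le> (\<Prod>j<h. exp (- (2 * real j + 1) / (real B + real h)))"
    using tpos up by (intro prod_mono) (auto intro: less_imp_le)
  also have "\<dots> = exp (\<Sum>j<h. - (2 * real j + 1) / (real B + real h))" by (simp add: exp_sum)
  also have "(\<Sum>j<h. - (2 * real j + 1) / (real B + real h)) = - (\<Sum>j<h. 2 * real j + 1) / (real B + real h)"
    by (simp only: sum_divide_distrib[symmetric] sum_negf)
  finally show "real (N choose M) / real (N choose B) \<le> exp (- (real h ^ 2) / (real B + real h))"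
    unfolding ratio sum_odd .
  have "exp (- (real h * (real h + 1)) / (real A - real h + 1)) = exp (- (\<Sum>j<h. 2 * real j + 2) / (real A - real h + 1))"
    by (simp only: sum_even)
  also have "- (\<Sum>j<h. 2 * real j + 2) / (real A - real h + 1) = (\<Sum>j<h. - (2 * real j + 2) / (real A - real h + 1))"
    by (simp only: sum_divide_distrib[symmetric] sum_negf)
  also have "exp \<dots> = (\<Prod>j<h. exp (- (2 * real j + 2) / (real A - real h + 1)))" by (simp add: exp_sum)
  also have "\<dots> \<le> (\<Prod>j<h. t j)"
    using lo by (intro prod_mono) auto
  finally show "exp (- (real h * (real h + 1)) / (real A - real h + 1)) \<le> real (N choose M) / real (N choose B)"
    unfolding ratio .
qed


lemma aux_L:
  fixes n hh aa :: real assumes "n > 0"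
  shows "(hh^2/n + hh/n)/(aa/n - hh/n + 1/n) = hh*(hh+1)/(aa - hh + 1)"
proof -
  have e1: "hh^2/n + hh/n = (hh*(hh+1))/n" by (simp add: add_divide_distrib power2_eq_square algebra_simps)
  have e2: "aa/n - hh/n + 1/n = (aa - hh + 1)/n" by (simp add: add_divide_distrib diff_divide_distrib)
  show ?thesis unfolding e1 e2 using assms by simp
qed

lemma aux_U:
  fixes n hh bb :: real assumes "n > 0"
  shows "(hh^2/n)/(bb/n + hh/n) = hh^2/(bb + hh)"
proof -
  have e2: "bb/n + hh/n = (bb + hh)/n" by (simp add: add_divide_distrib)
  show ?thesis unfolding e2 using assms by simp
qed

lemma canc_aux: fixes c s t m :: real shows "c > 0 \<Longrightarrow> c * s / t * (m / c) = m * s / t"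
  by simp

lemma binom_local_half:
  fixes N M :: "nat \<Rightarrow> nat" and b :: real
  assumes NM: "\<And>r. N r \<le> 2 * M r" "\<And>r. M r \<le> N r"
    and Ninf: "filterlim N at_top sequentially"
    and lim: "((\<lambda>r. (2*real (M r) - real (N r)) / sqrt (real (N r))) \<longlongrightarrow> b) sequentially"
  shows "((\<lambda>r. real (N r choose M r) * sqrt (real (N r)) / 2^(N r)) \<longlongrightarrow> sqrt (2/pi) * exp (-(b^2)/2)) sequentially"
proof -
  define A where "A r = N r div 2" for r
  define B where "B r = N r - N r div 2" for r
  define h where "h r = M r - (N r - N r div 2)" for r
  define s where "s r = sqrt (real (N r))" for r
  define d where "d r = real (N r) - 2 * real (A r)" for r
  define x where "x r = real (h r) / s r" for r
  have hA: "h r \<le> A r" for r unfolding h_def A_def using NM(2)[of r] by arith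
  have ev1: "eventually (\<lambda>r. 1 \<le> N r) sequentially" using Ninf by (simp add: filterlim_at_top)
  have realN: "filterlim (\<lambda>r. real (N r)) at_top sequentially"
    by (rule filterlim_compose[OF filterlim_real_sequentially Ninf])
  have sinf: "filterlim s at_top sequentially" unfolding s_def
    by (rule filterlim_compose[OF sqrt_at_top realN])
  have inv_s: "((\<lambda>r. 1 / s r) \<longlongrightarrow> 0) sequentially"
    by (intro tendsto_divide_0[OF tendsto_const] filterlim_at_top_imp_at_infinity sinf)
  have inv_N: "((\<lambda>r. 1 / real (N r)) \<longlongrightarrow> 0) sequentially"
    by (intro tendsto_divide_0[OF tendsto_const] filterlim_at_top_imp_at_infinity realN)
  have d01: "0 \<le> d r" "d r \<le> 1" for r unfolding d_def A_def by linarith+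
  have d_s: "((\<lambda>r. d r / s r) \<longlongrightarrow> 0) sequentially"
  proof (rule real_tendsto_sandwich[OF _ _ tendsto_const inv_s])
    show "eventually (\<lambda>r. 0 \<le> d r / s r) sequentially"
      by (intro always_eventually allI) (simp add: d01 s_def)
    show "eventually (\<lambda>r. d r / s r \<le> 1 / s r) sequentially"
      by (intro always_eventually allI divide_right_mono) (simp_all add: d01 s_def)
  qed
  have d_N: "((\<lambda>r. d r / real (N r)) \<longlongrightarrow> 0) sequentially"
  proof (rule real_tendsto_sandwich[OF _ _ tendsto_const inv_N])
    show "eventually (\<lambda>r. 0 \<le> d r / real (N r)) sequentially"
      by (intro always_eventually allI) (simp add: d01)
    show "eventually (\<lambda>r. d r / real (N r) \<le> 1 / real (N r)) sequentially"
      by (intro always_eventually allI divide_right_mono) (simp_all add: d01)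
  qed
  have h2: "2 * real (h r) = (2 * real (M r) - real (N r)) - d r" for r
  proof -
    have "M r \<ge> N r - N r div 2" using NM(1)[of r] by linarith
    then show ?thesis unfolding h_def d_def A_def by (simp add: of_nat_diff)
  qed
  have xlim: "(x \<longlongrightarrow> b/2) sequentially"
  proof -
    have "((\<lambda>r. ((2*real (M r) - real (N r)) / s r - d r / s r) / 2) \<longlongrightarrow> (b - 0)/2) sequentially"
      using lim d_s unfolding s_def by (intro tendsto_intros) auto
    moreover have "((2*real (M r) - real (N r)) / s r - d r / s r) / 2 = x r" for r
    proof -
      have e: "2*real (M r) - real (N r) = 2*real (h r) + d r" using h2[of r] by simp
      show ?thesis unfolding x_def e by (simp add: add_divide_distrib)
    qed
    ultimately show ?thesis by simp
  qed
  have x_s: "((\<lambda>r. x r / s r) \<longlongrightarrow> 0) sequentially"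
    using tendsto_mult[OF xlim inv_s] by simp
  have BN: "((\<lambda>r. real (B r) / real (N r)) \<longlongrightarrow> 1/2) sequentially"
  proof -
    have "((\<lambda>r. 1/2 + (d r / real (N r)) / 2) \<longlongrightarrow> 1/2 + 0/2) sequentially"
      by (intro tendsto_intros d_N) simp_all
    moreover have "eventually (\<lambda>r. 1/2 + (d r / real (N r)) / 2 = real (B r) / real (N r)) sequentially"
      using ev1 by eventually_elim (simp add: B_def d_def A_def field_simps of_nat_diff)
    ultimately show ?thesis by (simp add: tendsto_cong)
  qed
  have AN: "((\<lambda>r. real (A r) / real (N r)) \<longlongrightarrow> 1/2) sequentially"
  proof -
    have "((\<lambda>r. 1/2 - (d r / real (N r)) / 2) \<longlongrightarrow> 1/2 - 0/2) sequentially"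
      by (intro tendsto_intros d_N) simp_all
    moreover have "eventually (\<lambda>r. 1/2 - (d r / real (N r)) / 2 = real (A r) / real (N r)) sequentially"
      using ev1 by eventually_elim (simp add: d_def field_simps)
    ultimately show ?thesis by (simp add: tendsto_cong)
  qed
  define U where "U r = real (h r) ^ 2 / (real (B r) + real (h r))" for r
  define L where "L r = real (h r) * (real (h r) + 1) / (real (A r) - real (h r) + 1)" for r
  have Ulim: "(U \<longlongrightarrow> b^2/2) sequentially"
  proof -
    have "((\<lambda>r. x r ^ 2 / (real (B r) / real (N r) + x r / s r)) \<longlongrightarrow> (b/2)^2 / (1/2 + 0)) sequentially"
      by (intro tendsto_intros xlim BN x_s) simp
    moreover have "eventually (\<lambda>r. x r ^ 2 / (real (B r) / real (N r) + x r / s r) = U r) sequentially"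
      using ev1
    proof eventually_elim
      case (elim r)
      have sN: "s r * s r = real (N r)" "s r > 0" "real (N r) > 0" "N r \<noteq> 0"
        "1 + real (A r) - real (h r) \<noteq> 0" "real (A r) - real (h r) + 1 \<noteq> 0"
        using elim hA[of r] by (auto simp: s_def)
      have x2: "x r ^ 2 = real (h r) ^ 2 / real (N r)" unfolding x_def using sN
        by (simp add: power_divide power2_eq_square)
      have xs: "x r / s r = real (h r) / real (N r)" unfolding x_def using sN by simp
      show ?case unfolding x2 xs U_def by (rule aux_U) (use sN in simp)
    qed
    ultimately show ?thesis by (simp add: tendsto_cong power2_eq_square)
  qed
  have Llim: "(L \<longlongrightarrow> b^2/2) sequentially"
  proof -
    have "((\<lambda>r. (x r ^ 2 + x r / s r) / (real (A r) / real (N r) - x r / s r + 1 / real (N r))) \<longlongrightarrow> ((b/2)^2 + 0) / (1/2 - 0 + 0)) sequentially"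
      by (intro tendsto_intros xlim AN x_s inv_N) simp
    moreover have "eventually (\<lambda>r. (x r ^ 2 + x r / s r) / (real (A r) / real (N r) - x r / s r + 1 / real (N r)) = L r) sequentially"
      using ev1
    proof eventually_elim
      case (elim r)
      have sN: "s r * s r = real (N r)" "s r > 0" "real (N r) > 0" "N r \<noteq> 0"
        "1 + real (A r) - real (h r) \<noteq> 0" "real (A r) - real (h r) + 1 \<noteq> 0"
        using elim hA[of r] by (auto simp: s_def)
      have x2: "x r ^ 2 = real (h r) ^ 2 / real (N r)" unfolding x_def using sN
        by (simp add: power_divide power2_eq_square)
      have xs: "x r / s r = real (h r) / real (N r)" unfolding x_def using sN by simp
      show ?case unfolding x2 xs L_def by (rule aux_L) (use sN in simp)
    qed
    ultimately show ?thesis by (simp add: tendsto_cong power2_eq_square)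
  qed
  define Rt where "Rt r = real (N r choose M r) / real (N r choose B r)" for r
  have Rlim: "(Rt \<longlongrightarrow> exp (-(b^2)/2)) sequentially"
  proof (rule real_tendsto_sandwich)
    show "eventually (\<lambda>r. exp (- L r) \<le> Rt r) sequentially"
      using ev1 by eventually_elim
        (unfold Rt_def L_def A_def B_def h_def minus_divide_left, rule ratio_bounds(1)[OF NM(1) NM(2)])
    show "eventually (\<lambda>r. Rt r \<le> exp (- U r)) sequentially"
      using ev1 by eventually_elim
        (unfold Rt_def U_def A_def B_def h_def minus_divide_left, rule ratio_bounds(2)[OF NM(1) NM(2)])
    show "((\<lambda>r. exp (- L r)) \<longlongrightarrow> exp (-(b^2)/2)) sequentially"
      using tendsto_exp[OF tendsto_minus[OF Llim]] by (simp only: minus_divide_left)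
    show "((\<lambda>r. exp (- U r)) \<longlongrightarrow> exp (-(b^2)/2)) sequentially"
      using tendsto_exp[OF tendsto_minus[OF Ulim]] by (simp only: minus_divide_left)
  qed
  have cenN: "((\<lambda>r. cen (N r)) \<longlongrightarrow> sqrt (2/pi)) sequentially"
    by (rule filterlim_compose[OF cen_lim Ninf])
  have "((\<lambda>r. cen (N r) * Rt r) \<longlongrightarrow> sqrt (2/pi) * exp (-(b^2)/2)) sequentially"
    by (intro tendsto_intros cenN Rlim)
  moreover have "cen (N r) * Rt r = real (N r choose M r) * sqrt (real (N r)) / 2^(N r)" for r
  proof -
    have e: "(N r + 1) div 2 = B r" unfolding B_def by linarith
    have "real (N r choose B r) > 0" unfolding B_def by simp
    then show ?thesis unfolding cen_def Rt_def e by (rule canc_aux)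
  qed
  ultimately show ?thesis by simp
qed

lemma binom_local:
  fixes N M :: "nat \<Rightarrow> nat" and a :: real
  assumes NM: "\<And>r. M r \<le> N r"
    and Ninf: "filterlim N at_top sequentially"
    and lim: "((\<lambda>r. (2*real (M r) - real (N r)) / sqrt (real (N r))) \<longlongrightarrow> a) sequentially"
  shows "((\<lambda>r. real (N r choose M r) * sqrt (real (N r)) / 2^(N r)) \<longlongrightarrow> sqrt (2/pi) * exp (-(a^2)/2)) sequentially"
proof -
  define M' where "M' r = max (M r) (N r - M r)" for r
  have c1: "N r \<le> 2 * M' r" for r unfolding M'_def by auto
  have c2: "M' r \<le> N r" for r unfolding M'_def using NM[of r] by auto
  have eqC: "N r choose M' r = N r choose M r" for r
    unfolding M'_def using binomial_symmetric[OF NM[of r]] NM[of r] by (auto simp: max_def)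
  have eqd: "(2*real (M' r) - real (N r)) / sqrt (real (N r)) = \<bar>(2*real (M r) - real (N r)) / sqrt (real (N r))\<bar>" for r
  proof -
    have "2*real (M' r) - real (N r) = \<bar>2*real (M r) - real (N r)\<bar>"
      unfolding M'_def using NM[of r] by (auto simp: max_def of_nat_diff)
    then show ?thesis by (simp add: abs_divide)
  qed
  have lim': "((\<lambda>r. (2*real (M' r) - real (N r)) / sqrt (real (N r))) \<longlongrightarrow> \<bar>a\<bar>) sequentially"
    unfolding eqd by (rule tendsto_rabs[OF lim])
  from binom_local_half[OF c1 c2 Ninf lim'] show ?thesis by (simp add: eqC)
qed


lemma fact_split: "k \<le> m \<Longrightarrow> (fact m :: real) = fact (m - k) * (\<Prod>i<k. real (m - i))"
proof (induction k)
  case 0 then show ?case by simp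
next
  case (Suc k)
  then have IH: "(fact m :: real) = fact (m - k) * (\<Prod>i<k. real (m - i))" by simp
  have "m - k > 0" using Suc.prems by simp
  then have "(fact (m - k) :: real) = real (m - k) * fact (m - k - 1)"
    by (rule fact_reduce)
  moreover have "m - k - 1 = m - Suc k" by simp
  ultimately have F: "(fact (m - k) :: real) = real (m - k) * fact (m - Suc k)" by simp
  show ?case unfolding IH F prod.lessThan_Suc by (simp only: ac_simps)
qed

lemma id_a:
  fixes s2p sr C T Y Rn Q E :: real
  assumes "Y > 0" "Rn > 0" "T > 0" "Q > 0"
  shows "s2p/2 * (C * sr/(T*Y)) * (Rn/Q) * (E*Y/(Rn*Rn)) = (s2p * sr)*C*E/(2*T*Rn*Q)"
  using assms by (simp add: field_simps)

lemma id_b: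
  fixes s2p sr C T Rn Q e1 e2 fq fn :: real
  shows "(fq * fn * (s2p * sr) / (T * Rn)) * ((C / Q) * e1 * e2) / 2 = (s2p * sr)*C*(e1*e2*fq*fn)/(2*T*Rn*Q)"
  by (simp add: field_simps)

lemma id_c:
  fixes e1 e2 fq fn Pa Pb Pc A1 A2 B1 B2 :: real
  assumes "B1 > 0" "B2 > 0"
  shows "(e1 * Pa * fq / B1) * (e2 * Pb * fn / B2) * ((B1 / A1) * (B2 / A2) * Pc) = (e1*e2*fq*fn) * (Pa*Pb*Pc) / (A1*A2)"
  using assms by (simp add: field_simps)

lemma big_ident:
  fixes s2p sr sN T C Q e1 e2 Pa Pb Pc PN fq fn A1 A2 B1 B2 Rn :: real
  assumes pos: "T > 0" "Rn > 0" "Q > 0" "B1 > 0" "B2 > 0" "sN > 0"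
    "Pa > 0" "Pb > 0" "Pc > 0"
    and rel1: "PN = T * (Pa * Pb * Pc)" and rel2: "A1 * A2 = Rn * Rn"
  shows "(fq * fn * (s2p * sr) / (T * Rn)) * ((C / Q) * e1 * e2) / 2 =
    s2p / 2 * (C * sN / PN) * (Rn / Q) * (e1 * Pa * fq / B1) * (e2 * Pb * fn / B2) *
    ((B1 / A1) * (B2 / A2) * Pc) * (sr / sN)"
proof -
  have "s2p / 2 * (C * sN / PN) * (Rn / Q) * (e1 * Pa * fq / B1) * (e2 * Pb * fn / B2) *
    ((B1 / A1) * (B2 / A2) * Pc) * (sr / sN) =
    s2p / 2 * ((C * sN / PN) * (sr / sN)) * (Rn / Q) * ((e1 * Pa * fq / B1) * (e2 * Pb * fn / B2) *
    ((B1 / A1) * (B2 / A2) * Pc))" by (simp only: ac_simps)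
  also have "(C * sN / PN) * (sr / sN) = C * sr / (T * (Pa * Pb * Pc))" using pos unfolding rel1 by simp
  also have "(e1 * Pa * fq / B1) * (e2 * Pb * fn / B2) * ((B1 / A1) * (B2 / A2) * Pc) = (e1*e2*fq*fn) * (Pa*Pb*Pc) / (Rn*Rn)"
    unfolding id_c[OF pos(4,5)] rel2 ..
  also have "s2p / 2 * (C * sr / (T * (Pa * Pb * Pc))) * (Rn / Q) * ((e1*e2*fq*fn) * (Pa*Pb*Pc) / (Rn*Rn))
      = (s2p * sr)*C*(e1*e2*fq*fn)/(2*T*Rn*Q)"
    by (rule id_a) (use pos in auto)
  finally show ?thesis unfolding id_b by simp
qed


lemma Kc_eq:
  assumes "n \<ge> 1" "r \<ge> n" "1 \<le> m" "m \<le> r"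
  shows "Kc n r m = real ((r-1) choose (m-1)) / (\<Prod>i<n-1. real (r - 1 - i))"
proof -
  have b: "real ((r-1) choose (m-1)) = fact (r-1) / (fact (m-1) * fact (r - 1 - (m - 1)))"
    using assms by (intro binomial_fact) auto
  have e: "r - 1 - (m - 1) = r - m" using assms by auto
  have f: "(fact (r-1) :: real) = fact (r - 1 - (n - 1)) * (\<Prod>i<n-1. real (r - 1 - i))"
    using assms by (intro fact_split) auto
  have e2: "r - 1 - (n - 1) = r - n" using assms by auto
  define Q where "Q = (\<Prod>i<n-1. real (r - 1 - i))"
  have Qpos: "Q > 0" unfolding Q_def
    using assms by (intro prod_pos) auto
  show ?thesis unfolding Kc_def b e f e2 Q_def[symmetric] using Qpos by (simp add: field_simps)
qed

lemma nat_at_top_of_real: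
  fixes f :: "nat \<Rightarrow> nat"
  assumes "filterlim (\<lambda>r. real (f r)) at_top F"
  shows "filterlim f at_top F"
  unfolding filterlim_at_top
proof
  fix Z :: nat
  have "\<forall>Z::real. eventually (\<lambda>r. Z \<le> real (f r)) F" using assms by (simp add: filterlim_at_top)
  then have "eventually (\<lambda>r. real Z \<le> real (f r)) F" by blast
  then show "eventually (\<lambda>r. Z \<le> f r) F" by eventually_elim simp
qed

lemma at_top_of_ratio:
  fixes f :: "nat \<Rightarrow> nat" and c :: real
  assumes "((\<lambda>r. real (f r) / real r) \<longlongrightarrow> c) sequentially" "c > 0"
  shows "filterlim f at_top sequentially"
proof (rule nat_at_top_of_real)
  have "filterlim (\<lambda>r. real (f r) / real r * real r) at_top sequentially"
    by (rule filterlim_tendsto_pos_mult_at_top[OF assms(1) assms(2) filterlim_real_sequentially])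
  moreover have "eventually (\<lambda>r. real (f r) / real r * real r = real (f r)) sequentially"
    using eventually_gt_at_top[of 0] by eventually_elim simp
  ultimately show "filterlim (\<lambda>r. real (f r)) at_top sequentially"
    using filterlim_cong by (metis (mono_tags, lifting) eventually_mono)
qed

lemma ratio_const_lim: "((\<lambda>r. real r / (real r - c)) \<longlongrightarrow> 1) sequentially"
proof -
  have "((\<lambda>r. 1 / (1 - c / real r)) \<longlongrightarrow> 1 / (1 - 0)) sequentially"
    by (intro tendsto_intros tendsto_divide_0[OF tendsto_const] filterlim_at_top_imp_at_infinity
        filterlim_real_sequentially) simp
  moreover have "eventually (\<lambda>r. 1 / (1 - c / real r) = real r / (real r - c)) sequentially"
    using eventually_gt_at_top[of "nat \<lceil>\<bar>c\<bar>\<rceil> + 1"]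
  proof eventually_elim
    case (elim r)
    then have "real r > \<bar>c\<bar>" by linarith
    then have "real r \<noteq> 0" "real r - c \<noteq> 0" by auto
    then show ?case by (simp add: field_simps)
  qed
  ultimately show ?thesis by (simp add: tendsto_cong)
qed

lemma inv_sqrt_lim: "((\<lambda>r. 1 / sqrt (real r - c)) \<longlongrightarrow> 0) sequentially"
proof -
  have "filterlim (\<lambda>r. real r - c) at_top sequentially"
    by (rule filterlim_tendsto_add_at_top[OF tendsto_const filterlim_real_sequentially, of "-c", simplified])
  then have "filterlim (\<lambda>r. sqrt (real r - c)) at_top sequentially"
    by (rule filterlim_compose[OF sqrt_at_top])
  then show ?thesis by (intro tendsto_divide_0[OF tendsto_const] filterlim_at_top_imp_at_infinity)
qed

lemma det_limit:
  fixes n q :: nat and p :: "nat \<Rightarrow> int" and a :: real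
  assumes n2: "n \<ge> 2" and q: "q \<in> {1..n}"
    and prange: "\<forall>r\<ge>n. 0 \<le> p r \<and> p r \<le> int r - int n"
    and lim: "((\<lambda>r. (2 * real_of_int (p r) - real r) / sqrt (real r)) \<longlongrightarrow> a) sequentially"
  shows "((\<lambda>r. (fact (q - 1) * fact (n - q) * sqrt (2 * pi * real r)
             / (2 powr (real r + 2 - 3 * real n) * real r ^ (n - 1)))
           * (\<Sum>I\<in>subsets_r n r. pure_diagram n r I (nat (p r)) q) / 2)
      \<longlongrightarrow> exp (- (a\<^sup>2) / 2)) sequentially"
proof -
  define P where "P r = nat (p r)" for r
  define M where "M r = P r + q - 1" for r
  define R where "R r = r - (P r + q)" for r
  define N where "N r = r - (1::nat)" for r
  define Q where "Q r = (\<Prod>i<n-1. real (r - 1 - i))" for r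
  define v where "v r = (2 * real_of_int (p r) - real r) / sqrt (real r)" for r
  have q1: "1 \<le> q" "q \<le> n" using q by auto
  have evn: "eventually (\<lambda>r. n + 1 \<le> r) sequentially" by (rule eventually_ge_at_top)
  have hP: "real (P r) = real_of_int (p r)" "P r + q \<le> r" "P r \<le> r - n" if "n \<le> r" for r
    using prange that q1 by (auto simp: P_def)
  have inv_sqrt: "((\<lambda>r. 1 / sqrt (real r)) \<longlongrightarrow> 0) sequentially"
    using inv_sqrt_lim[of 0] by simp
  have inv_r: "((\<lambda>r. 1 / real r) \<longlongrightarrow> (0::real)) sequentially"
    by (intro tendsto_divide_0[OF tendsto_const] filterlim_at_top_imp_at_infinity filterlim_real_sequentially)
  have Pr: "((\<lambda>r. real (P r) / real r) \<longlongrightarrow> 1/2) sequentially"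
  proof -
    have "((\<lambda>r. 1/2 + v r * (1 / sqrt (real r)) / 2) \<longlongrightarrow> 1/2 + a * 0 / 2) sequentially"
      using lim inv_sqrt unfolding v_def by (intro tendsto_intros) auto
    moreover have "eventually (\<lambda>r. 1/2 + v r * (1 / sqrt (real r)) / 2 = real (P r) / real r) sequentially"
      using evn
    proof eventually_elim
      case (elim r)
      have r0: "real r > 0" using elim by simp
      have ss: "sqrt (real r) * sqrt (real r) = real r" by simp
      show ?case unfolding v_def hP(1)[of r] using elim r0 hP(1)[of r] ss
        by (simp add: field_simps)
    qed
    ultimately show ?thesis by (simp add: tendsto_cong)
  qed
  have Mr: "((\<lambda>r. real (M r) / real r) \<longlongrightarrow> 1/2) sequentially"
  proof -
    have "((\<lambda>r. real (P r) / real r + (real q - 1) * (1 / real r)) \<longlongrightarrow> 1/2 + (real q - 1) * 0) sequentially"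
      by (intro tendsto_intros Pr inv_r)
    moreover have "real (P r) / real r + (real q - 1) * (1 / real r) = real (M r) / real r" for r
      unfolding M_def using q1 by (simp add: of_nat_diff add_divide_distrib diff_divide_distrib)
    ultimately show ?thesis by simp
  qed
  have Rr: "((\<lambda>r. real (R r) / real r) \<longlongrightarrow> 1/2) sequentially"
  proof -
    have "((\<lambda>r. 1 - real (P r) / real r - real q * (1 / real r)) \<longlongrightarrow> 1 - 1/2 - real q * 0) sequentially"
      by (intro tendsto_intros Pr inv_r)
    moreover have "eventually (\<lambda>r. 1 - real (P r) / real r - real q * (1 / real r) = real (R r) / real r) sequentially"
      using evn
    proof eventually_elim
      case (elim r)
      then have "P r + q \<le> r" "real r > 0" using hP(2)[of r] by auto
      then show ?case unfolding R_def by (simp add: of_nat_diff field_simps)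
    qed
    ultimately show ?thesis by (simp add: tendsto_cong)
  qed
  have Minf: "filterlim M at_top sequentially" by (rule at_top_of_ratio[OF Mr]) simp
  have Rinf: "filterlim R at_top sequentially" by (rule at_top_of_ratio[OF Rr]) simp
  have Ninf: "filterlim N at_top sequentially" unfolding N_def by (rule filterlim_minus_const_nat_at_top)
  define M' where "M' r = min (M r) (N r)" for r
  have G1: "((\<lambda>r. real (N r choose M' r) * sqrt (real (N r)) / 2^(N r)) \<longlongrightarrow> sqrt (2/pi) * exp (-(a^2)/2)) sequentially"
  proof (rule binom_local[OF _ Ninf])
    show "M' r \<le> N r" for r by (simp add: M'_def)
    have "((\<lambda>r. v r * sqrt (real r / (real r - 1)) + (2 * real q - 1) * (1 / sqrt (real r - 1))) \<longlongrightarrow>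
        a * sqrt 1 + (2 * real q - 1) * 0) sequentially"
      using lim unfolding v_def by (intro tendsto_intros ratio_const_lim inv_sqrt_lim)
    moreover have "eventually (\<lambda>r. v r * sqrt (real r / (real r - 1)) + (2 * real q - 1) * (1 / sqrt (real r - 1)) =
        (2 * real (M' r) - real (N r)) / sqrt (real (N r))) sequentially"
      using evn
    proof eventually_elim
      case (elim r)
      have rn: "n \<le> r" "P r + q \<le> r" using elim hP(2)[of r] by auto
      have MN: "M' r = M r" unfolding M'_def M_def N_def using rn q1 by auto
      have rN: "real (N r) = real r - 1" unfolding N_def using rn n2 by (simp add: of_nat_diff)
      have rM: "real (M r) = real_of_int (p r) + real q - 1" unfolding M_def using hP(1)[OF rn(1)] q1
        by (simp add: of_nat_diff)
      have r1: "real r - 1 > 0" using rn n2 by simp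
      have sq: "sqrt (real r / (real r - 1)) = sqrt (real r) / sqrt (real r - 1)" by (simp add: real_sqrt_divide)
      have s0: "sqrt (real r) > 0" "sqrt (real r - 1) > 0" using r1 by auto
      show ?case unfolding MN rN rM v_def sq using s0
        by (simp add: field_simps)
    qed
    ultimately show "((\<lambda>r. (2 * real (M' r) - real (N r)) / sqrt (real (N r))) \<longlongrightarrow> a) sequentially"
      by (simp add: tendsto_cong)
  qed
  have G2: "((\<lambda>r. real r ^ (n-1) / Q r) \<longlongrightarrow> 1) sequentially"
  proof -
    have "((\<lambda>r. \<Prod>i<n-1. real r / (real r - (1 + real i))) \<longlongrightarrow> (\<Prod>i<n-1. (1::real))) sequentially"
      by (intro tendsto_prod ratio_const_lim)
    moreover have "eventually (\<lambda>r. (\<Prod>i<n-1. real r / (real r - (1 + real i))) = real r ^ (n-1) / Q r) sequentially"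
      using evn
    proof eventually_elim
      case (elim r)
      have "(\<Prod>i<n-1. real r / (real r - (1 + real i))) = (\<Prod>i<n-1. real r / real (r - 1 - i))"
        using elim by (intro prod.cong refl) (auto simp: of_nat_diff)
      also have "\<dots> = real r ^ (n-1) / Q r" unfolding Q_def by (simp add: prod_dividef)
      finally show ?case .
    qed
    ultimately show ?thesis by (simp add: tendsto_cong)
  qed
  have G3: "((\<lambda>r. esym (q-1) (M r) * 2^(q-1) * fact (q-1) / real (M r) ^ (2*(q-1))) \<longlongrightarrow> 1) sequentially"
    by (rule filterlim_compose[OF esym_limit Minf])
  have G4: "((\<lambda>r. esym (n-q) (R r) * 2^(n-q) * fact (n-q) / real (R r) ^ (2*(n-q))) \<longlongrightarrow> 1) sequentially"
    by (rule filterlim_compose[OF esym_limit Rinf])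
  have G5: "((\<lambda>r. (real (M r) ^ (2*(q-1)) / real r ^ (2*(q-1))) * (real (R r) ^ (2*(n-q)) / real r ^ (2*(n-q))) * 2^(2*n-2))
      \<longlongrightarrow> 1) sequentially"
  proof -
    have "((\<lambda>r. (real (M r) / real r) ^ (2*(q-1)) * (real (R r) / real r) ^ (2*(n-q)) * 2^(2*n-2))
      \<longlongrightarrow> (1/2) ^ (2*(q-1)) * (1/2) ^ (2*(n-q)) * 2^(2*n-2)) sequentially"
      by (intro tendsto_intros Mr Rr)
    moreover have "(1/2::real) ^ (2*(q-1)) * (1/2) ^ (2*(n-q)) * 2^(2*n-2) = 1"
    proof -
      have "2*(q-1) + 2*(n-q) = 2*n-2" using q1 by auto
      then have "(1/2::real) ^ (2*(q-1)) * (1/2) ^ (2*(n-q)) = (1/2) ^ (2*n-2)"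
        by (metis power_add)
      then show ?thesis by (simp add: power_one_over)
    qed
    ultimately show ?thesis by (simp add: power_divide)
  qed
  have G6: "((\<lambda>r. sqrt (real r) / sqrt (real (N r))) \<longlongrightarrow> 1) sequentially"
  proof -
    have "((\<lambda>r. sqrt (real r / (real r - 1))) \<longlongrightarrow> sqrt 1) sequentially"
      by (intro tendsto_intros ratio_const_lim)
    moreover have "eventually (\<lambda>r. sqrt (real r / (real r - 1)) = sqrt (real r) / sqrt (real (N r))) sequentially"
      using evn by eventually_elim (simp add: N_def of_nat_diff real_sqrt_divide)
    ultimately show ?thesis by (simp add: tendsto_cong)
  qed
  define LHS where "LHS r = (fact (q - 1) * fact (n - q) * sqrt (2 * pi * real r)
             / (2 powr (real r + 2 - 3 * real n) * real r ^ (n - 1)))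
           * (\<Sum>I\<in>subsets_r n r. pure_diagram n r I (nat (p r)) q) / 2" for r
  have all: "((\<lambda>r. sqrt (2*pi) / 2 * (real (N r choose M' r) * sqrt (real (N r)) / 2^(N r)) * (real r ^ (n-1) / Q r) *
      (esym (q-1) (M r) * 2^(q-1) * fact (q-1) / real (M r) ^ (2*(q-1))) *
      (esym (n-q) (R r) * 2^(n-q) * fact (n-q) / real (R r) ^ (2*(n-q))) *
      ((real (M r) ^ (2*(q-1)) / real r ^ (2*(q-1))) * (real (R r) ^ (2*(n-q)) / real r ^ (2*(n-q))) * 2^(2*n-2)) *
      (sqrt (real r) / sqrt (real (N r))))
     \<longlongrightarrow> sqrt (2*pi) / 2 * (sqrt (2/pi) * exp (-(a^2)/2)) * 1 * 1 * 1 * 1 * 1) sequentially"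
    by (intro tendsto_intros G1 G2 G3 G4 G5 G6)
  have const: "sqrt (2*pi) / 2 * (sqrt (2/pi) * exp (-(a^2)/2)) * 1 * 1 * 1 * 1 * 1 = exp (- (a\<^sup>2) / 2)"
  proof -
    have "sqrt (2*pi) * sqrt (2/pi) = 2"
      by (simp add: real_sqrt_mult[symmetric])
    then show ?thesis by simp
  qed
  have evM: "eventually (\<lambda>r. 1 \<le> M r) sequentially" using Minf by (simp add: filterlim_at_top)
  have evR: "eventually (\<lambda>r. 1 \<le> R r) sequentially" using Rinf by (simp add: filterlim_at_top)
  have ident: "eventually (\<lambda>r. LHS r = sqrt (2*pi) / 2 * (real (N r choose M' r) * sqrt (real (N r)) / 2^(N r)) * (real r ^ (n-1) / Q r) *
      (esym (q-1) (M r) * 2^(q-1) * fact (q-1) / real (M r) ^ (2*(q-1))) *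
      (esym (n-q) (R r) * 2^(n-q) * fact (n-q) / real (R r) ^ (2*(n-q))) *
      ((real (M r) ^ (2*(q-1)) / real r ^ (2*(q-1))) * (real (R r) ^ (2*(n-q)) / real r ^ (2*(n-q))) * 2^(2*n-2)) *
      (sqrt (real r) / sqrt (real (N r)))) sequentially"
    using evn evM evR
  proof eventually_elim
    case (elim r)
    have rn: "n \<le> r" "P r + q \<le> r" using elim hP(2)[of r] by auto
    have MN: "M' r = M r" unfolding M'_def M_def N_def using rn q1 by auto
    have prl: "P r \<le> r - n" using prange rn(1) by (auto simp: P_def)
    have f1: "n \<ge> 1" using n2 by simp
    have sum: "(\<Sum>I\<in>subsets_r n r. pure_diagram n r I (nat (p r)) q) =
         Kc n r (P r + q) * esym (q - 1) (M r) * esym (n - q) (R r)"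
      unfolding M_def R_def P_def[symmetric] by (rule sum_pure[OF f1 rn(1) prl q])
    have K: "Kc n r (P r + q) = real (N r choose M r) / Q r"
      unfolding N_def M_def Q_def by (rule Kc_eq) (use n2 rn q1 in auto)
    have rel1: "2 ^ (N r) = 2 powr (real r + 2 - 3 * real n) * (2^(q-1) * 2^(n-q) * 2^(2*n-2) :: real)"
    proof -
      have "(2::real)^(q-1) * 2^(n-q) * 2^(2*n-2) = 2^(q-1 + (n-q) + (2*n-2))" by (simp add: power_add)
      also have "q-1 + (n-q) + (2*n-2) = 3*n - 3" using q1 n2 by auto
      finally have e: "(2::real)^(q-1) * 2^(n-q) * 2^(2*n-2) = 2 powr real (3*n-3)"
        by (simp add: powr_realpow)
      have "2 powr (real r + 2 - 3 * real n) * 2 powr real (3*n-3) = 2 powr (real r + 2 - 3 * real n + real (3*n-3))"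
        by (simp add: powr_add)
      also have "real r + 2 - 3 * real n + real (3*n-3) = real (N r)"
        unfolding N_def using n2 rn by (simp add: of_nat_diff)
      finally show ?thesis unfolding e by (simp add: powr_realpow)
    qed
    have rel2: "real r ^ (2*(q-1)) * real r ^ (2*(n-q)) = real r ^ (n-1) * real r ^ (n-1)"
    proof -
      have "2*(q-1) + 2*(n-q) = (n-1) + (n-1)" using q1 by auto
      then show ?thesis by (metis power_add)
    qed
    have sq: "sqrt (2 * pi * real r) = sqrt (2*pi) * sqrt (real r)" by (simp add: real_sqrt_mult)
    have Qpos: "Q r > 0" unfolding Q_def using rn n2 by (intro prod_pos) auto
    show ?case unfolding LHS_def sum K MN sq
      by (rule big_ident) (use Qpos rel1 rel2 elim rn n2 in \<open>auto simp: N_def\<close>)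
  qed
  have "(LHS \<longlongrightarrow> exp (- (a\<^sup>2) / 2)) sequentially"
    using all unfolding const using ident by (simp add: tendsto_cong)
  then show ?thesis unfolding LHS_def .
qed


abbreviation "UU \<equiv> uniform_measure lborel {0..1::real}"

lemma UU_prob: "prob_space UU"
  by (rule prob_space_uniform_measure) simp_all

lemma Omega_prob: "prob_space (Omega n)"
  unfolding Omega_def by (rule prob_space_PiM) (rule UU_prob)

lemma comp_meas_UU:
  assumes "i \<in> subsets_inf n"
  shows "(\<lambda>x. x i) \<in> measurable (Omega n) UU"
  unfolding Omega_def using assms by (rule measurable_component_singleton)

lemma comp_meas:
  assumes "i \<in> subsets_inf n"
  shows "(\<lambda>x. x i) \<in> borel_measurable (Omega n)"
proof -
  have "(\<lambda>x. x i) \<in> measurable (Omega n) UU"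
    unfolding Omega_def using assms by (rule measurable_component_singleton)
  moreover have "measurable (Omega n) UU = measurable (Omega n) borel"
    by (rule measurable_cong_sets) simp_all
  ultimately show ?thesis by simp
qed

lemma coord_indep:
  assumes J: "J \<subseteq> subsets_inf n" "finite J" "J \<noteq> {}"
  shows "prob_space.indep_vars (Omega n) (\<lambda>_. borel) (\<lambda>i x. x i) J"
proof -
  interpret U: prob_space UU by (rule UU_prob)
  interpret product_prob_space "\<lambda>_. UU" "subsets_inf n" by unfold_locales
  have O: "Omega n = PiM (subsets_inf n) (\<lambda>_. UU)" by (simp add: Omega_def)
  interpret O: prob_space "Omega n" by (rule Omega_prob)
  show ?thesis
  proof (subst O.indep_vars_iff_distr_eq_PiM')
    show "J \<noteq> {}" by fact
    show "O.random_variable borel (\<lambda>x. x i)" if "i \<in> J" for i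
      using comp_meas[of i n] that J by (auto simp: Omega_def)
    have "distr (Omega n) (PiM J (\<lambda>_. borel)) (\<lambda>x. \<lambda>i\<in>J. x i) = distr (PiM (subsets_inf n) (\<lambda>_. UU)) (PiM J (\<lambda>_. UU)) (\<lambda>x. restrict x J)"
      unfolding O by (intro distr_cong) (auto intro!: sets_PiM_cong simp: restrict_def)
    also have "\<dots> = PiM J (\<lambda>_. UU)" by (rule distr_PiM_restrict_finite) (use J in auto)
    also have "\<dots> = PiM J (\<lambda>i. distr (Omega n) borel (\<lambda>x. x i))"
    proof (rule PiM_cong)
      fix i assume i: "i \<in> J"
      have "distr (Omega n) borel (\<lambda>x. x i) = distr (PiM (subsets_inf n) (\<lambda>_. UU)) UU (\<lambda>x. x i)"
        unfolding O by (intro distr_cong) auto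
      also have "\<dots> = UU" by (rule PiM_component) (use i J in auto)
      finally show "UU = distr (Omega n) borel (\<lambda>x. x i)" by simp
    qed simp
    finally show "distr (Omega n) (PiM J (\<lambda>_. borel)) (\<lambda>x. \<lambda>i\<in>J. x i) = PiM J (\<lambda>i. distr (Omega n) borel (\<lambda>x. x i))" .
  qed
qed

lemma coord_AE:
  assumes "i \<in> subsets_inf n"
  shows "AE x in Omega n. x i \<in> {0..1}"
proof -
  have "AE x in UU. x \<in> {0..1}" by (rule AE_uniform_measureI) auto
  then show ?thesis unfolding Omega_def
    using AE_PiM_component[of "subsets_inf n" "\<lambda>_. UU" i "\<lambda>x. x \<in> {0..1}"] UU_prob assms by blast
qed

lemma UU_density: "UU = density lborel (\<lambda>x. ennreal (indicator {0..1} x))"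
  unfolding uniform_measure_def by (simp add: ennreal_indicator divide_ennreal_def)

lemma UU_mean: "integral\<^sup>L UU (\<lambda>y. y) = (1/2::real)"
proof -
  have "integral\<^sup>L UU (\<lambda>y. y) = (\<integral>x. indicator {0..1} x *\<^sub>R x \<partial>lborel)"
    unfolding UU_density by (rule integral_density) auto
  also have "\<dots> = (\<integral>x. x^1 * indicator {0..1} x \<partial>lborel)" by (simp add: mult.commute)
  also have "\<dots> = 1/2" by (subst integral_power) auto
  finally show ?thesis .
qed

lemma coord_expect:
  assumes "i \<in> subsets_inf n"
  shows "prob_space.expectation (Omega n) (\<lambda>x. x i) = 1/2"
proof -
  have "prob_space.expectation (Omega n) (\<lambda>x. x i) = integral\<^sup>L (distr (Omega n) UU (\<lambda>x. x i)) (\<lambda>y. y)"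
    by (rule integral_distr[symmetric]) (use comp_meas_UU[OF assms] in simp_all)
  also have "distr (Omega n) UU (\<lambda>x. x i) = UU"
    unfolding Omega_def by (rule distr_PiM_component[OF _ assms]) (rule UU_prob)
  also have "integral\<^sup>L UU (\<lambda>y. y) = 1/2" by (rule UU_mean)
  finally show ?thesis .
qed


lemma hoeff_bound:
  fixes w :: "nat set \<Rightarrow> real"
  assumes J: "J \<subseteq> subsets_inf n" "finite J" and wnn: "\<And>I. I \<in> J \<Longrightarrow> w I \<ge> 0"
    and pos: "(\<Sum>I\<in>J. (w I)\<^sup>2) > 0" and e: "e \<ge> 0"
  shows "measure (Omega n) {x \<in> space (Omega n). \<bar>(\<Sum>I\<in>J. w I * x I) - (\<Sum>I\<in>J. w I) / 2\<bar> \<ge> e}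
     \<le> 2 * exp (-2 * e\<^sup>2 / (\<Sum>I\<in>J. (w I)\<^sup>2))"
proof -
  interpret O: prob_space "Omega n" by (rule Omega_prob)
  have Jne: "J \<noteq> {}" using pos by auto
  have ind: "O.indep_vars (\<lambda>_. borel) (\<lambda>I x. w I * x I) J"
    using O.indep_vars_compose2[OF coord_indep[OF J Jne], of "\<lambda>I y. w I * y" "\<lambda>_. borel"] by simp
  have ex: "O.expectation (\<lambda>x. w I * x I) = w I / 2" if "I \<in> J" for I
    using coord_expect[of I n] that J by auto
  interpret H: Hoeffding_ineq "Omega n" J "\<lambda>I x. w I * x I" "\<lambda>_. 0" w "(\<Sum>I\<in>J. w I) / 2"
  proof unfold_locales
    show "finite J" by fact
    show "O.indep_vars (\<lambda>_. borel) (\<lambda>I x. w I * x I) J" by fact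
    fix I assume I: "I \<in> J"
    have ae: "AE x in Omega n. x I \<in> {0..1}" using coord_AE[of I n] I J by auto
    show "AE x in Omega n. w I * x I \<in> {0..w I}"
      using ae
    proof (rule eventually_mono)
      fix x :: "nat set \<Rightarrow> real" assume "x I \<in> {0..1}"
      then show "w I * x I \<in> {0..w I}" using wnn[OF I] by (auto intro: mult_left_le)
    qed
  next
    have "(\<Sum>I\<in>J. O.expectation (\<lambda>x. w I * x I)) = (\<Sum>I\<in>J. w I / 2)"
      by (rule sum.cong[OF refl ex])
    also have "\<dots> = (\<Sum>I\<in>J. w I) / 2" by (simp add: sum_divide_distrib)
    finally show "(\<Sum>I\<in>J. w I) / 2 \<equiv> \<Sum>I\<in>J. O.expectation (\<lambda>x. w I * x I)"
      by (rule eq_reflection[OF sym])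
  qed
  show ?thesis using H.Hoeffding_ineq_abs_ge[OF e] pos by simp
qed

lemma weighted_slln:
  fixes w :: "nat \<Rightarrow> nat set \<Rightarrow> real" and S :: "nat \<Rightarrow> nat set set" and \<kappa> :: real
  assumes S: "\<And>r. S r \<subseteq> subsets_inf n" "\<And>r. finite (S r)"
    and wnn: "\<And>r I. I \<in> S r \<Longrightarrow> w r I \<ge> 0"
    and kpos: "\<kappa> > 0"
    and ev: "eventually (\<lambda>r. (\<Sum>I\<in>S r. w r I) > 0 \<and>
               \<kappa> * real r \<le> (\<Sum>I\<in>S r. w r I)\<^sup>2 / (\<Sum>I\<in>S r. (w r I)\<^sup>2)) sequentially"
  shows "AE x in Omega n. ((\<lambda>r. (\<Sum>I\<in>S r. x I * w r I) / (\<Sum>I\<in>S r. w r I)) \<longlongrightarrow> 1/2) sequentially"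
proof -
  interpret O: prob_space "Omega n" by (rule Omega_prob)
  define W where "W r = (\<Sum>I\<in>S r. w r I)" for r
  define V where "V r = (\<Sum>I\<in>S r. (w r I)\<^sup>2)" for r
  define C where "C r = (W r > 0 \<and> \<kappa> * real r \<le> (W r)\<^sup>2 / V r)" for r
  define F where "F r x = \<bar>(\<Sum>I\<in>S r. w r I * x I) - W r / 2\<bar>" for r and x :: "nat set \<Rightarrow> real"
  define A where "A k r = (if C r then {x \<in> space (Omega n). W r / real (Suc k) \<le> F r x} else {})" for k r
  have Fm: "F r \<in> borel_measurable (Omega n)" for r
  proof -
    have "(\<lambda>x. (\<Sum>I\<in>S r. w r I * x I)) \<in> borel_measurable (Omega n)"
      by (intro borel_measurable_sum borel_measurable_times borel_measurable_const comp_meas) (use S in auto)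
    then show ?thesis unfolding F_def by measurable
  qed
  have Am: "A k r \<in> sets (Omega n)" for k r
  proof (cases "C r")
    case True
    have [measurable]: "F r \<in> borel_measurable (Omega n)" by (rule Fm)
    have "{x \<in> space (Omega n). W r / real (Suc k) \<le> F r x} \<in> sets (Omega n)" by measurable
    then show ?thesis using True by (simp add: A_def)
  qed (simp add: A_def)
  define \<delta> where "\<delta> k = 2 * \<kappa> / (real (Suc k))\<^sup>2" for k
  have \<delta>pos: "\<delta> k > 0" for k using kpos by (simp add: \<delta>_def)
  have Abound: "measure (Omega n) (A k r) \<le> 2 * exp (- \<delta> k) ^ r" for k r
  proof (cases "C r")
    case False then show ?thesis by (simp add: A_def)
  next
    case True
    then have W0: "W r > 0" and kr: "\<kappa> * real r \<le> (W r)\<^sup>2 / V r" by (auto simp: C_def)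
    obtain I0 where I0: "I0 \<in> S r" "w r I0 > 0"
    proof (rule ccontr)
      assume "\<not> thesis"
      then have "\<forall>I\<in>S r. w r I \<le> 0" using that by force
      then have "W r \<le> 0" unfolding W_def by (intro sum_nonpos) auto
      then show False using W0 by simp
    qed
    have V0: "V r > 0" unfolding V_def
      by (rule sum_pos2[OF S(2) I0(1)]) (use I0 in auto)
    have "measure (Omega n) (A k r) = measure (Omega n) {x \<in> space (Omega n).
        \<bar>(\<Sum>I\<in>S r. w r I * x I) - (\<Sum>I\<in>S r. w r I) / 2\<bar> \<ge> W r / real (Suc k)}"
      using True by (simp add: A_def F_def W_def)
    also have "\<dots> \<le> 2 * exp (-2 * (W r / real (Suc k))\<^sup>2 / (\<Sum>I\<in>S r. (w r I)\<^sup>2))"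
      by (rule hoeff_bound) (use S wnn V0 W0 in \<open>auto simp: V_def\<close>)
    also have "-2 * (W r / real (Suc k))\<^sup>2 / (\<Sum>I\<in>S r. (w r I)\<^sup>2) = - (2 / (real (Suc k))\<^sup>2) * ((W r)\<^sup>2 / V r)"
      by (simp add: V_def power_divide field_simps)
    also have "exp (- (2 / (real (Suc k))\<^sup>2) * ((W r)\<^sup>2 / V r)) \<le> exp (- \<delta> k * real r)"
    proof -
      have "2 / (real (Suc k))\<^sup>2 * (\<kappa> * real r) \<le> 2 / (real (Suc k))\<^sup>2 * ((W r)\<^sup>2 / V r)"
        using kr by (intro mult_left_mono) auto
      then show ?thesis by (simp add: \<delta>_def)
    qed
    also have "exp (- \<delta> k * real r) = exp (- \<delta> k) ^ r"
      by (metis exp_of_nat_mult mult.commute)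
    finally show ?thesis by simp
  qed
  have summ: "summable (\<lambda>r. measure (Omega n) (A k r))" for k
  proof (rule summable_comparison_test[where g="\<lambda>r. 2 * exp (- \<delta> k) ^ r"])
    show "\<exists>N. \<forall>r\<ge>N. norm (measure (Omega n) (A k r)) \<le> 2 * exp (- \<delta> k) ^ r"
      using Abound by auto
    show "summable (\<lambda>r. 2 * exp (- \<delta> k) ^ r)"
      using \<delta>pos[of k] by (intro summable_mult summable_geometric) auto
  qed
  have BC: "AE x in Omega n. eventually (\<lambda>r. x \<in> space (Omega n) - A k r) sequentially" for k
  proof (rule borel_cantelli_AE1)
    show "A k r \<in> sets (Omega n)" for r by (rule Am)
    show "emeasure (Omega n) (A k r) < \<infinity>" for r
      unfolding infinity_ennreal_def by (meson Omega_prob less_top prob_space_imp_subprob_space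
          subprob_space.emeasure_subprob_space_less_top)
    show "summable (\<lambda>r. measure (Omega n) (A k r))" by (rule summ)
  qed
  have "AE x in Omega n. \<forall>k. eventually (\<lambda>r. x \<in> space (Omega n) - A k r) sequentially"
    using BC by (simp add: AE_all_countable)
  then show ?thesis
  proof (rule eventually_mono)
    fix x assume x: "\<forall>k. eventually (\<lambda>r. x \<in> space (Omega n) - A k r) sequentially"
    show "((\<lambda>r. (\<Sum>I\<in>S r. x I * w r I) / (\<Sum>I\<in>S r. w r I)) \<longlongrightarrow> 1/2) sequentially"
    proof (rule tendstoI)
      fix e :: real assume e: "e > 0"
      obtain k where k: "inverse (real (Suc k)) < e" using reals_Archimedean[OF e] by blast
      have evC: "eventually C sequentially" using ev unfolding C_def W_def V_def .
      show "eventually (\<lambda>r. dist ((\<Sum>I\<in>S r. x I * w r I) / (\<Sum>I\<in>S r. w r I)) (1/2) < e) sequentially"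
        using x[rule_format, of k] evC
      proof eventually_elim
        case (elim r)
        then have Cr: "C r" and nA: "x \<notin> A k r" by auto
        have W0: "W r > 0" using Cr by (simp add: C_def)
        have xs: "x \<in> space (Omega n)" using elim by auto
        have "F r x < W r / real (Suc k)" using nA Cr xs by (auto simp: A_def)
        then have "\<bar>(\<Sum>I\<in>S r. x I * w r I) - W r / 2\<bar> < W r / real (Suc k)"
          by (simp add: F_def mult.commute)
        then have "\<bar>(\<Sum>I\<in>S r. x I * w r I) / W r - 1/2\<bar> < 1 / real (Suc k)"
          using W0 by (simp add: field_simps abs_div_pos[symmetric] diff_divide_distrib[symmetric])
        also have "\<dots> < e" using k by (simp add: inverse_eq_divide)
        finally show ?case by (simp add: dist_real_def W_def)
      qed
    qed
  qed
qed


lemma MR_lims: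
  fixes n q :: nat and p :: "nat \<Rightarrow> int" and a :: real
  assumes n2: "n \<ge> 2" and q: "q \<in> {1..n}"
    and prange: "\<forall>r\<ge>n. 0 \<le> p r \<and> p r \<le> int r - int n"
    and lim: "((\<lambda>r. (2 * real_of_int (p r) - real r) / sqrt (real r)) \<longlongrightarrow> a) sequentially"
  shows "((\<lambda>r. real (nat (p r) + q - 1) / real r) \<longlongrightarrow> 1/2) sequentially"
    and "((\<lambda>r. real (r - (nat (p r) + q)) / real r) \<longlongrightarrow> 1/2) sequentially"
proof -
  define P where "P r = nat (p r)" for r
  define v where "v r = (2 * real_of_int (p r) - real r) / sqrt (real r)" for r
  have q1: "1 \<le> q" "q \<le> n" using q by auto
  have evn: "eventually (\<lambda>r. n + 1 \<le> r) sequentially" by (rule eventually_ge_at_top)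
  have hP: "real (P r) = real_of_int (p r)" "P r + q \<le> r" if "n \<le> r" for r
    using prange that q1 by (auto simp: P_def)
  have inv_sqrt: "((\<lambda>r. 1 / sqrt (real r)) \<longlongrightarrow> 0) sequentially"
    using inv_sqrt_lim[of 0] by simp
  have inv_r: "((\<lambda>r. 1 / real r) \<longlongrightarrow> (0::real)) sequentially"
    by (intro tendsto_divide_0[OF tendsto_const] filterlim_at_top_imp_at_infinity filterlim_real_sequentially)
  have Pr: "((\<lambda>r. real (P r) / real r) \<longlongrightarrow> 1/2) sequentially"
  proof -
    have "((\<lambda>r. 1/2 + v r * (1 / sqrt (real r)) / 2) \<longlongrightarrow> 1/2 + a * 0 / 2) sequentially"
      using lim inv_sqrt unfolding v_def by (intro tendsto_intros) auto
    moreover have "eventually (\<lambda>r. 1/2 + v r * (1 / sqrt (real r)) / 2 = real (P r) / real r) sequentially"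
      using evn
    proof eventually_elim
      case (elim r)
      have r0: "real r > 0" using elim by simp
      have ss: "sqrt (real r) * sqrt (real r) = real r" by simp
      show ?case unfolding v_def hP(1)[of r] using elim r0 hP(1)[of r] ss
        by (simp add: field_simps)
    qed
    ultimately show ?thesis by (simp add: tendsto_cong)
  qed
  show "((\<lambda>r. real (nat (p r) + q - 1) / real r) \<longlongrightarrow> 1/2) sequentially"
  proof -
    have "((\<lambda>r. real (P r) / real r + (real q - 1) * (1 / real r)) \<longlongrightarrow> 1/2 + (real q - 1) * 0) sequentially"
      by (intro tendsto_intros Pr inv_r)
    moreover have "real (P r) / real r + (real q - 1) * (1 / real r) = real (nat (p r) + q - 1) / real r" for r
      unfolding P_def using q1 by (simp add: of_nat_diff add_divide_distrib diff_divide_distrib)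
    ultimately show ?thesis by simp
  qed
  show "((\<lambda>r. real (r - (nat (p r) + q)) / real r) \<longlongrightarrow> 1/2) sequentially"
  proof -
    have "((\<lambda>r. 1 - real (P r) / real r - real q * (1 / real r)) \<longlongrightarrow> 1 - 1/2 - real q * 0) sequentially"
      by (intro tendsto_intros Pr inv_r)
    moreover have "eventually (\<lambda>r. 1 - real (P r) / real r - real q * (1 / real r) = real (r - (nat (p r) + q)) / real r) sequentially"
      using evn
    proof eventually_elim
      case (elim r)
      then have "P r + q \<le> r" "real r > 0" using hP(2)[of r] by auto
      then show ?case unfolding P_def by (simp add: of_nat_diff field_simps)
    qed
    ultimately show ?thesis by (simp add: tendsto_cong)
  qed
qed

lemma weight_bound:
  fixes n q :: nat and p :: "nat \<Rightarrow> int" and a :: real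
  assumes n2: "n \<ge> 2" and q: "q \<in> {1..n}"
    and prange: "\<forall>r\<ge>n. 0 \<le> p r \<and> p r \<le> int r - int n"
    and lim: "((\<lambda>r. (2 * real_of_int (p r) - real r) / sqrt (real r)) \<longlongrightarrow> a) sequentially"
  defines "\<kappa> \<equiv> 1 / (16^(n-1) * (2^(n-1) * fact (q-1) * fact (n-q)))"
  shows "eventually (\<lambda>r. (\<Sum>I\<in>subsets_r n r. pure_diagram n r I (nat (p r)) q) > 0 \<and>
     \<kappa> * real r \<le> (\<Sum>I\<in>subsets_r n r. pure_diagram n r I (nat (p r)) q)\<^sup>2 /
                 (\<Sum>I\<in>subsets_r n r. (pure_diagram n r I (nat (p r)) q)\<^sup>2)) sequentially"
proof -
  define M where "M r = nat (p r) + q - 1" for r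
  define R where "R r = r - (nat (p r) + q)" for r
  have q1: "1 \<le> q" "q \<le> n" using q by auto
  have Mr: "((\<lambda>r. real (M r) / real r) \<longlongrightarrow> 1/2) sequentially"
    unfolding M_def by (rule MR_lims(1)[OF n2 q prange lim])
  have Rr: "((\<lambda>r. real (R r) / real r) \<longlongrightarrow> 1/2) sequentially"
    unfolding R_def by (rule MR_lims(2)[OF n2 q prange lim])
  have e1: "eventually (\<lambda>r. 1/3 < real (M r) / real r) sequentially"
    using Mr by (rule order_tendstoD) simp
  have e2: "eventually (\<lambda>r. 1/3 < real (R r) / real r) sequentially"
    using Rr by (rule order_tendstoD) simp
  have e3: "eventually (\<lambda>r. 12 * n + 1 \<le> r) sequentially" by (rule eventually_ge_at_top)
  show ?thesis using e1 e2 e3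
  proof eventually_elim
    case (elim r)
    define w where "w I = pure_diagram n r I (nat (p r)) q" for I
    define S where "S = subsets_r n r"
    define K where "K = Kc n r (nat (p r) + q)"
    define x where "x = real r"
    have rn: "n \<le> r" using elim n2 by linarith
    have x1: "x \<ge> 12 * real n + 1" using elim unfolding x_def by linarith
    have xpos: "x > 0" using x1 by simp
    have pr: "nat (p r) \<le> r - n" using prange rn by auto
    have n1: "n \<ge> 1" using n2 by simp
    have Kpos: "K > 0" unfolding K_def by (rule Kc_pos)
    have finS: "finite S" unfolding S_def subsets_r_def
      by (rule finite_subset[of _ "Pow {1..r}"]) auto
    have wnn: "w I \<ge> 0" if "I \<in> S" for I
      unfolding w_def using pure_nonneg[OF _ n1 rn pr q] that by (simp add: S_def)
    have wle: "w I \<le> K * x ^ (n-1)" if "I \<in> S" for I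
      unfolding w_def K_def x_def using pure_le[OF _ n1 rn pr q] that by (simp add: S_def)
    have Wsum: "(\<Sum>I\<in>S. w I) = K * esym (q-1) (M r) * esym (n-q) (R r)"
      unfolding w_def S_def K_def M_def R_def by (rule sum_pure[OF n1 rn pr q])
    have Mlow: "x / 4 \<le> real (M r) - real (q - 1)"
    proof -
      have "real (M r) > x / 3" using elim xpos by (simp add: x_def field_simps)
      moreover have "real (q-1) \<le> real n" using q1 by simp
      ultimately show ?thesis using x1 by linarith
    qed
    have Rlow: "x / 4 \<le> real (R r) - real (n - q)"
    proof -
      have "real (R r) > x / 3" using elim xpos by (simp add: x_def field_simps)
      moreover have "real (n-q) \<le> real n" by simp
      ultimately show ?thesis using x1 by linarith
    qed
    have E1: "(x/4)^(2*(q-1)) / (2^(q-1) * fact (q-1)) \<le> esym (q-1) (M r)"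
    proof -
      have "(x/4)^(2*(q-1)) \<le> (max 0 (real (M r) - real (q-1)))^(2*(q-1))"
        using Mlow xpos by (intro power_mono) auto
      then have "(x/4)^(2*(q-1)) / (2^(q-1) * fact (q-1)) \<le> esl (q-1) (M r)"
        unfolding esl_def by (intro divide_right_mono) auto
      then show ?thesis using esym_lower[of "q-1" "M r"] by linarith
    qed
    have E2: "(x/4)^(2*(n-q)) / (2^(n-q) * fact (n-q)) \<le> esym (n-q) (R r)"
    proof -
      have "(x/4)^(2*(n-q)) \<le> (max 0 (real (R r) - real (n-q)))^(2*(n-q))"
        using Rlow xpos by (intro power_mono) auto
      then have "(x/4)^(2*(n-q)) / (2^(n-q) * fact (n-q)) \<le> esl (n-q) (R r)"
        unfolding esl_def by (intro divide_right_mono) auto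
      then show ?thesis using esym_lower[of "n-q" "R r"] by linarith
    qed
    define D where "D = (2^(n-1) * fact (q-1) * fact (n-q) :: real)"
    have Dpos: "D > 0" by (simp add: D_def)
    have prodlow: "(x/4)^(2*(n-1)) / D \<le> esym (q-1) (M r) * esym (n-q) (R r)"
    proof -
      have "(x/4)^(2*(q-1)) / (2^(q-1) * fact (q-1)) * ((x/4)^(2*(n-q)) / (2^(n-q) * fact (n-q)))
          \<le> esym (q-1) (M r) * esym (n-q) (R r)"
        using E1 E2 xpos esym_nonneg by (intro mult_mono) auto
      moreover have h1: "2*(q-1) + 2*(n-q) = 2*(n-1)" using q1 by auto
      moreover have h2: "(2::real)^(q-1) * 2^(n-q) = 2^(n-1)"
      proof -
        have "q - 1 + (n - q) = n - 1" using q1 by auto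
        then show ?thesis by (metis power_add)
      qed
      moreover have "(x/4)^(2*(q-1)) / (2^(q-1) * fact (q-1)) * ((x/4)^(2*(n-q)) / (2^(n-q) * fact (n-q)))
          = (x/4)^(2*(q-1) + 2*(n-q)) / (((2::real)^(q-1) * 2^(n-q)) * (fact (q-1) * fact (n-q)))"
        by (simp add: power_add)
      ultimately show ?thesis unfolding D_def by (simp add: mult.assoc)
    qed
    have Spos: "esym (q-1) (M r) * esym (n-q) (R r) > 0"
    proof -
      have "(x/4)^(2*(n-1)) / D > 0" using xpos Dpos by simp
      then show ?thesis using prodlow by linarith
    qed
    have W0: "(\<Sum>I\<in>S. w I) > 0" unfolding Wsum using Kpos Spos by (simp add: mult.assoc)
    have Vle: "(\<Sum>I\<in>S. (w I)\<^sup>2) \<le> K * x ^ (n-1) * (\<Sum>I\<in>S. w I)"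
    proof -
      have "(\<Sum>I\<in>S. (w I)\<^sup>2) \<le> (\<Sum>I\<in>S. K * x ^ (n-1) * w I)"
        using wnn wle by (intro sum_mono) (simp add: power2_eq_square mult_right_mono)
      then show ?thesis by (simp add: sum_distrib_left)
    qed
    have V0: "(\<Sum>I\<in>S. (w I)\<^sup>2) > 0"
    proof -
      obtain I0 where "I0 \<in> S" "w I0 > 0"
        using W0 wnn by (metis (no_types, lifting) less_le sum_nonpos not_le)
      then show ?thesis by (intro sum_pos2[OF finS]) auto
    qed
    have ratio: "(\<Sum>I\<in>S. w I) / (K * x ^ (n-1)) \<le> (\<Sum>I\<in>S. w I)\<^sup>2 / (\<Sum>I\<in>S. (w I)\<^sup>2)"
    proof -
      have "(\<Sum>I\<in>S. w I)\<^sup>2 / (\<Sum>I\<in>S. (w I)\<^sup>2) \<ge> (\<Sum>I\<in>S. w I)\<^sup>2 / (K * x ^ (n-1) * (\<Sum>I\<in>S. w I))"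
        using Vle V0 W0 by (intro divide_left_mono) auto
      moreover have "(\<Sum>I\<in>S. w I)\<^sup>2 / (K * x ^ (n-1) * (\<Sum>I\<in>S. w I)) = (\<Sum>I\<in>S. w I) / (K * x ^ (n-1))"
        using W0 by (simp add: power2_eq_square)
      ultimately show ?thesis by simp
    qed
    have "(\<Sum>I\<in>S. w I) / (K * x ^ (n-1)) = esym (q-1) (M r) * esym (n-q) (R r) / x ^ (n-1)"
      unfolding Wsum using Kpos by simp
    also have "\<dots> \<ge> (x/4)^(2*(n-1)) / D / x ^ (n-1)"
      using prodlow xpos by (intro divide_right_mono) auto
    finally have A1: "(x/4)^(2*(n-1)) / D / x ^ (n-1) \<le> (\<Sum>I\<in>S. w I)\<^sup>2 / (\<Sum>I\<in>S. (w I)\<^sup>2)"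
      using ratio by linarith
    have "(x/4)^(2*(n-1)) / D / x ^ (n-1) = x^(n-1) / (16^(n-1) * D)"
    proof -
      have "(x/4)^(2*(n-1)) = (x/4)^((n-1)+(n-1))" by (simp add: mult_2)
      also have "\<dots> = (x^(n-1) / 4^(n-1)) * (x^(n-1) / 4^(n-1))" by (simp add: power_add power_divide)
      also have "(4::real)^(n-1) * 4^(n-1) = 16^(n-1)" by (simp flip: power_mult_distrib)
      then have "(x^(n-1) / 4^(n-1)) * (x^(n-1) / 4^(n-1)) = (x^(n-1))^2 / 16^(n-1)"
        by (simp add: power2_eq_square)
      finally have "(x/4)^(2*(n-1)) = (x^(n-1))^2 / 16^(n-1)" .
      then show ?thesis using xpos Dpos by (simp add: power2_eq_square field_simps)
    qed
    moreover have "\<kappa> * x \<le> x^(n-1) / (16^(n-1) * D)"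
    proof -
      have "x \<le> x^(n-1)" using x1 n2 by (intro self_le_power) auto
      then show ?thesis unfolding \<kappa>_def D_def using Dpos by (simp add: divide_right_mono)
    qed
    ultimately have "\<kappa> * x \<le> (\<Sum>I\<in>S. w I)\<^sup>2 / (\<Sum>I\<in>S. (w I)\<^sup>2)" using A1 by linarith
    then show ?case using W0 unfolding w_def S_def x_def by simp
  qed
qed

theorem mainTheorem7:
  fixes n q :: nat and p :: "nat \<Rightarrow> int" and a :: real
  assumes "n \<ge> 2" and "q \<in> {1..n}"
    and "\<forall>r\<ge>n. 0 \<le> p r \<and> p r \<le> int r - int n"
    and "((\<lambda>r. (2 * real_of_int (p r) - real r) / sqrt (real r)) \<longlongrightarrow> a) sequentially"
  shows "AE x in Omega n.
    ((\<lambda>r. (fact (q - 1) * fact (n - q) * sqrt (2 * pi * real r)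
             / (2 powr (real r + 2 - 3 * real n) * real r ^ (n - 1)))
           * kx n x r (nat (p r)) q)
      \<longlongrightarrow> exp (- (a\<^sup>2) / 2)) sequentially"
proof -
  note A = assms
  define c where "c r = fact (q - 1) * fact (n - q) * sqrt (2 * pi * real r)
             / (2 powr (real r + 2 - 3 * real n) * real r ^ (n - 1))" for r
  define w where "w r I = pure_diagram n r I (nat (p r)) q" for r I
  define W where "W r = (\<Sum>I\<in>subsets_r n r. w r I)" for r
  have det: "((\<lambda>r. c r * W r / 2) \<longlongrightarrow> exp (- (a\<^sup>2) / 2)) sequentially"
    using det_limit[OF A] unfolding c_def W_def w_def .
  have evW: "eventually (\<lambda>r. W r \<noteq> 0) sequentially"
  proof -
    have "eventually (\<lambda>r. 0 < c r * W r / 2) sequentially"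
      using det by (rule order_tendstoD) simp
    then show ?thesis by eventually_elim auto
  qed
  have Ssub: "subsets_r n r \<subseteq> subsets_inf n" for r
    unfolding subsets_r_def subsets_inf_def by (auto intro: finite_subset)
  have Sfin: "finite (subsets_r n r)" for r unfolding subsets_r_def
    by (rule finite_subset[of _ "Pow {1..r}"]) auto
  have wnn: "w r I \<ge> 0" if "I \<in> subsets_r n r" for r I
    unfolding w_def pure_diagram_def by (simp add: prod_nonneg)
  obtain \<kappa> :: real where kpos: "\<kappa> > 0" and evk: "eventually (\<lambda>r. (\<Sum>I\<in>subsets_r n r. w r I) > 0 \<and>
     \<kappa> * real r \<le> (\<Sum>I\<in>subsets_r n r. w r I)\<^sup>2 / (\<Sum>I\<in>subsets_r n r. (w r I)\<^sup>2)) sequentially"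
  proof
    show "1 / (16^(n-1) * (2^(n-1) * fact (q-1) * fact (n-q))) > (0::real)" by simp
    show "eventually (\<lambda>r. (\<Sum>I\<in>subsets_r n r. w r I) > 0 \<and>
     1 / (16^(n-1) * (2^(n-1) * fact (q-1) * fact (n-q))) * real r \<le> (\<Sum>I\<in>subsets_r n r. w r I)\<^sup>2 / (\<Sum>I\<in>subsets_r n r. (w r I)\<^sup>2)) sequentially"
      unfolding w_def by (rule weight_bound[OF A])
  qed
  have slln: "AE x in Omega n. ((\<lambda>r. (\<Sum>I\<in>subsets_r n r. x I * w r I) / (\<Sum>I\<in>subsets_r n r. w r I)) \<longlongrightarrow> 1/2) sequentially"
    by (rule weighted_slln[OF Ssub Sfin wnn kpos evk])
  then show ?thesis
  proof (rule eventually_mono)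
    fix x :: "nat set \<Rightarrow> real"
    assume x: "((\<lambda>r. (\<Sum>I\<in>subsets_r n r. x I * w r I) / (\<Sum>I\<in>subsets_r n r. w r I)) \<longlongrightarrow> 1/2) sequentially"
    have "((\<lambda>r. (c r * W r / 2) * (2 * ((\<Sum>I\<in>subsets_r n r. x I * w r I) / W r))) \<longlongrightarrow>
        exp (- (a\<^sup>2) / 2) * (2 * (1/2))) sequentially"
      using tendsto_mult[OF det tendsto_mult[OF tendsto_const[of 2] x[unfolded W_def[symmetric]]]] .
    moreover have "eventually (\<lambda>r. (c r * W r / 2) * (2 * ((\<Sum>I\<in>subsets_r n r. x I * w r I) / W r)) =
        c r * kx n x r (nat (p r)) q) sequentially"
      using evW by eventually_elim (simp add: kx_def w_def)
    ultimately show "((\<lambda>r. (fact (q - 1) * fact (n - q) * sqrt (2 * pi * real r)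
             / (2 powr (real r + 2 - 3 * real n) * real r ^ (n - 1)))
           * kx n x r (nat (p r)) q) \<longlongrightarrow> exp (- (a\<^sup>2) / 2)) sequentially"
      unfolding c_def[symmetric] by (simp add: tendsto_cong)
  qed
qed


end
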